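(* Let $\{p_{(R,\alpha)}(\mathbf{x})\}_{(R,\alpha)}$ be a replacement rule satisfying the Fixation Axiom and Assumption 1, and let $\nu\in(0,1)$. Then the following are equivalent: (a) $\rho_A>\rho_a$; (b) $\mathbb{E}_{\mathrm{RMC}}[\Delta_{\mathrm{sel}}]>0$; (c) $\mathbb{E}_{\mathrm{RMC}}[\hat\Delta_{\mathrm{sel}}]>0$; (d) $\frac{d}{du}\mathbb{E}_{\mathrm{MSS}}[\Delta_{\mathrm{sel}}]\big|_{u=0}>0$; (e) $\frac{d}{du}\mathbb{E}_{\mathrm{MSS}}[\hat\Delta_{\mathrm{sel}}]\big|_{u=0}>0$; (f) $\lim_{u\to0}\mathbb{E}_{\mathrm{MSS}}[x]>\nu$. Moreover $\lim_{u\to0}\mathbb{E}_{\mathrm{MSS}}[x]=\lim_{u\to0}\mathbb{E}_{\mathrm{MSS}}[\hat x]$.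
   Context: Setting. $G$ is a finite nonempty set of genetic sites, $n=|G|$. A state is $\mathbf{x}\in\{0,1\}^G$ ($x_g=1$: allele $A$ at $g$; $0$: allele $a$). For $S\subseteq G$, $\mathbf{1}_S$ has $x_g=1$ iff $g\in S$; $\mathbf{a}=\mathbf{1}_\emptyset$, $\mathbf{A}=\mathbf{1}_G$. A replacement event is $(R,\alpha)$ with $R\subseteq G$, $\alpha:R\to G$; a replacement rule gives for each state a probability distribution $\{p_{(R,\alpha)}(\mathbf{x})\}$ over events. With mutation probability $u\in[0,1]$ and bias $\nu\in(0,1)$, the evolutionary Markov chain moves from $\mathbf{x}$: draw $(R,\alpha)$ with probability $p_{(R,\alpha)}(\mathbf{x})$; independently for $g\in R$, $x'_g=x_{\alpha(g)}$ w.p. $1-u$, $x'_g=1$ w.p. $u\nu$, $x'_g=0$ w.p. $u(1-\nu)$; $x'_g=x_g$ for $g\notin R$. $P^{(t)}_{\mathbf{x}\to\mathbf{y}}$ are $t$-step transition probabilities. Fixation Axiom: there exist $g\in G$, $m\ge1$, events $(R_k,\alpha_k)_{k=1}^m$ with $p_{(R_k,\alpha_k)}(\mathbf{x})>0$ for all $k,\mathbf{x}$, $g\in R_k$ for some $k$, and $\tilde\alpha_1\circ\cdots\circ\tilde\alpha_m(h)=g$ for all $h$, where $\tilde\alpha_k$ equals $\alpha_k$ on $R_k$ and the identity elsewhere. Quantities: $e_{gh}(\mathbf{x})=\sum_{(R,\alpha):h\in R,\alpha(h)=g}p_{(R,\alpha)}(\mathbf{x})$, $b_g=\sum_he_{gh}$,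 $d_g=\sum_he_{hg}$, $b=\sum_gb_g$, $x=\frac1n\sum_gx_g$, $\Delta_{\mathrm{sel}}(\mathbf{x})=\sum_gx_g(b_g(\mathbf{x})-d_g(\mathbf{x}))$. Fixation probabilities at $u=0$: $\mu_A(\mathbf{1}_{\{g\}})=d_g(\mathbf{a})/b(\mathbf{a})$ (zero elsewhere), $\mu_a(\mathbf{1}_{G\setminus\{g\}})=d_g(\mathbf{A})/b(\mathbf{A})$ (zero elsewhere), $\rho_A=\sum_\mathbf{x}\mu_A(\mathbf{x})\lim_tP^{(t)}_{\mathbf{x}\to\mathbf{A}}$, $\rho_a=\sum_\mathbf{x}\mu_a(\mathbf{x})\lim_tP^{(t)}_{\mathbf{x}\to\mathbf{a}}$. For $u>0$, $\pi_{\mathrm{MSS}}$ is the unique stationary distribution, extended smoothly to $u=0$ by limits ($\frac{d}{du}|_{u=0}$ is the one-sided derivative); $\pi_{\mathrm{RMC}}(\mathbf{x})=\lim_{u\to0}\pi_{\mathrm{MSS}}(\mathbf{x})/(1-\pi_{\mathrm{MSS}}(\mathbf{a})-\pi_{\mathrm{MSS}}(\mathbf{A}))$ for $\mathbf{x}\notin\{\mathbf{a},\mathbf{A}\}$. Assumption 1: $p_{(R,\alpha)}(\mathbf{A})=p_{(R,\alpha)}(\mathbf{a})$ for every event; write $e^\circ_{gh}=e_{gh}(\mathbf{a})=e_{gh}(\mathbf{A})$, $d^\circ_g=d_g(\mathbf{a})$. Reproductive values: $(v_g)_{g\in G}$ is the unique solution of $d^\circ_gv_g=\sum_he^\circ_{gh}v_h$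 for all $g$ and $\sum_gv_g=n$. $\hat x=\frac1n\sum_gv_gx_g$; $\hat b_g(\mathbf{x})=\sum_he_{gh}(\mathbf{x})v_h$; $\hat d_g(\mathbf{x})=v_gd_g(\mathbf{x})$; $\hat\Delta_{\mathrm{sel}}(\mathbf{x})=\sum_gx_g(\hat b_g(\mathbf{x})-\hat d_g(\mathbf{x}))$. *)

theory Defs
  imports Complex_Main
begin

text \<open>Sites: a finite type 'g (so G = UNIV, nonempty). A state x in {0,1}^G is
  represented by the set S = {g. x_g = 1} :: 'g set.  A replacement event (R, alpha)
  with alpha : R -> G is represented canonically by (R, alpha~) where alpha~ extends
  alpha by the identity outside R.\<close>

type_synonym 'g event = "'g set \<times> ('g \<Rightarrow> 'g)"

definition events :: "'g event set" where
  "events = {(R, \<alpha>). \<forall>h. h \<notin> R \<longrightarrow> \<alpha> h = h}"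

definition replacement_rule :: "('g set \<Rightarrow> 'g event \<Rightarrow> real) \<Rightarrow> bool" where
  "replacement_rule p \<longleftrightarrow>
     (\<forall>x e. 0 \<le> p x e) \<and> (\<forall>x e. e \<notin> events \<longrightarrow> p x e = 0) \<and>
     (\<forall>x. (\<Sum>e\<in>events. p x e) = 1)"

definition fixation_axiom :: "('g set \<Rightarrow> 'g event \<Rightarrow> real) \<Rightarrow> bool" where
  "fixation_axiom p \<longleftrightarrow>
     (\<exists>(g::'g) (es :: 'g event list).
        length es \<ge> 1 \<and>
        (\<forall>k < length es. es ! k \<in> events \<and> (\<forall>x. p x (es ! k) > 0)) \<and>
        (\<exists>k < length es. g \<in> fst (es ! k)) \<and>
        (\<forall>h. foldr (\<circ>) (map snd es) id h = g))"

definition assumption1 :: "('g set \<Rightarrow> 'g event \<Rightarrow> real) \<Rightarrow> bool" where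
  "assumption1 p \<longleftrightarrow> (\<forall>e. p UNIV e = p {} e)"

definition e_rate :: "('g set \<Rightarrow> 'g event \<Rightarrow> real) \<Rightarrow> 'g \<Rightarrow> 'g \<Rightarrow> 'g set \<Rightarrow> real" where
  "e_rate p g h x = (\<Sum>e\<in>{(R, \<alpha>) \<in> events. h \<in> R \<and> \<alpha> h = g}. p x e)"

definition b_rate :: "('g set \<Rightarrow> 'g event \<Rightarrow> real) \<Rightarrow> 'g \<Rightarrow> 'g set \<Rightarrow> real" where
  "b_rate p g x = (\<Sum>h\<in>UNIV. e_rate p g h x)"

definition d_rate :: "('g set \<Rightarrow> 'g event \<Rightarrow> real) \<Rightarrow> 'g \<Rightarrow> 'g set \<Rightarrow> real" where
  "d_rate p g x = (\<Sum>h\<in>UNIV. e_rate p h g x)"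

definition b_total :: "('g set \<Rightarrow> 'g event \<Rightarrow> real) \<Rightarrow> 'g set \<Rightarrow> real" where
  "b_total p x = (\<Sum>g\<in>UNIV. b_rate p g x)"

definition freqA :: "'g set \<Rightarrow> real" where
  "freqA x = real (card x) / real (card (UNIV :: 'g set))"

definition Delta_sel :: "('g set \<Rightarrow> 'g event \<Rightarrow> real) \<Rightarrow> 'g set \<Rightarrow> real" where
  "Delta_sel p x = (\<Sum>g\<in>x. b_rate p g x - d_rate p g x)"

definition repro_values :: "('g set \<Rightarrow> 'g event \<Rightarrow> real) \<Rightarrow> 'g \<Rightarrow> real" where
  "repro_values p = (THE v. (\<forall>g. d_rate p g {} * v g = (\<Sum>h\<in>UNIV. e_rate p g h {} * v h)) \<and>
                         (\<Sum>g\<in>UNIV. v g) = real (card (UNIV :: 'g set)))"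

definition freqA_hat :: "('g set \<Rightarrow> 'g event \<Rightarrow> real) \<Rightarrow> 'g set \<Rightarrow> real" where
  "freqA_hat p x = (\<Sum>g\<in>x. repro_values p g) / real (card (UNIV :: 'g set))"

definition b_hat :: "('g set \<Rightarrow> 'g event \<Rightarrow> real) \<Rightarrow> 'g \<Rightarrow> 'g set \<Rightarrow> real" where
  "b_hat p g x = (\<Sum>h\<in>UNIV. e_rate p g h x * repro_values p h)"

definition d_hat :: "('g set \<Rightarrow> 'g event \<Rightarrow> real) \<Rightarrow> 'g \<Rightarrow> 'g set \<Rightarrow> real" where
  "d_hat p g x = repro_values p g * d_rate p g x"

definition Delta_sel_hat :: "('g set \<Rightarrow> 'g event \<Rightarrow> real) \<Rightarrow> 'g set \<Rightarrow> real" where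
  "Delta_sel_hat p x = (\<Sum>g\<in>x. b_hat p g x - d_hat p g x)"

definition site_factor :: "real \<Rightarrow> real \<Rightarrow> 'g event \<Rightarrow> 'g set \<Rightarrow> 'g set \<Rightarrow> 'g \<Rightarrow> real" where
  "site_factor u \<nu> e x y g =
     (if g \<in> fst e then
        (1 - u) * (if (snd e g \<in> x) = (g \<in> y) then 1 else 0)
        + (if g \<in> y then u * \<nu> else u * (1 - \<nu>))
      else (if (g \<in> x) = (g \<in> y) then 1 else 0))"

definition trans :: "('g set \<Rightarrow> 'g event \<Rightarrow> real) \<Rightarrow> real \<Rightarrow> real \<Rightarrow> 'g set \<Rightarrow> 'g set \<Rightarrow> real" where
  "trans p \<nu> u x y = (\<Sum>e\<in>events. p x e * (\<Prod>g\<in>UNIV. site_factor u \<nu> e x y g))"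

fun trans_pow :: "('g set \<Rightarrow> 'g event \<Rightarrow> real) \<Rightarrow> real \<Rightarrow> real \<Rightarrow> nat \<Rightarrow> 'g set \<Rightarrow> 'g set \<Rightarrow> real" where
  "trans_pow p \<nu> u 0 x y = (if x = y then 1 else 0)"
| "trans_pow p \<nu> u (Suc t) x y = (\<Sum>z\<in>UNIV. trans_pow p \<nu> u t x z * trans p \<nu> u z y)"

definition rho_A :: "('g set \<Rightarrow> 'g event \<Rightarrow> real) \<Rightarrow> real \<Rightarrow> real" where
  "rho_A p \<nu> = (\<Sum>g\<in>UNIV. (d_rate p g {} / b_total p {}) *
                    lim (\<lambda>t. trans_pow p \<nu> 0 t {g} UNIV))"

definition rho_a :: "('g set \<Rightarrow> 'g event \<Rightarrow> real) \<Rightarrow> real \<Rightarrow> real" where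
  "rho_a p \<nu> = (\<Sum>g\<in>UNIV. (d_rate p g UNIV / b_total p UNIV) *
                    lim (\<lambda>t. trans_pow p \<nu> 0 t (UNIV - {g}) {}))"

definition stationary :: "('g set \<Rightarrow> 'g event \<Rightarrow> real) \<Rightarrow> real \<Rightarrow> real \<Rightarrow> ('g set \<Rightarrow> real) \<Rightarrow> bool" where
  "stationary p \<nu> u \<pi> \<longleftrightarrow> (\<forall>x. 0 \<le> \<pi> x) \<and> (\<Sum>x\<in>UNIV. \<pi> x) = 1 \<and>
      (\<forall>y. (\<Sum>x\<in>UNIV. \<pi> x * trans p \<nu> u x y) = \<pi> y)"

definition pi_MSS0 :: "('g set \<Rightarrow> 'g event \<Rightarrow> real) \<Rightarrow> real \<Rightarrow> real \<Rightarrow> 'g set \<Rightarrow> real" where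
  "pi_MSS0 p \<nu> u = (THE \<pi>. stationary p \<nu> u \<pi>)"

definition pi_MSS :: "('g set \<Rightarrow> 'g event \<Rightarrow> real) \<Rightarrow> real \<Rightarrow> real \<Rightarrow> 'g set \<Rightarrow> real" where
  "pi_MSS p \<nu> u x = (if 0 < u then pi_MSS0 p \<nu> u x
                      else Lim (at_right 0) (\<lambda>w. pi_MSS0 p \<nu> w x))"

definition E_MSS :: "('g set \<Rightarrow> 'g event \<Rightarrow> real) \<Rightarrow> real \<Rightarrow> ('g set \<Rightarrow> real) \<Rightarrow> real \<Rightarrow> real" where
  "E_MSS p \<nu> f u = (\<Sum>x\<in>UNIV. pi_MSS p \<nu> u x * f x)"

definition pi_RMC :: "('g set \<Rightarrow> 'g event \<Rightarrow> real) \<Rightarrow> real \<Rightarrow> 'g set \<Rightarrow> real" where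
  "pi_RMC p \<nu> x = Lim (at_right 0)
     (\<lambda>u. pi_MSS0 p \<nu> u x / (1 - pi_MSS0 p \<nu> u {} - pi_MSS0 p \<nu> u UNIV))"

definition E_RMC :: "('g set \<Rightarrow> 'g event \<Rightarrow> real) \<Rightarrow> real \<Rightarrow> ('g set \<Rightarrow> real) \<Rightarrow> real" where
  "E_RMC p \<nu> f = (\<Sum>x\<in>UNIV - {{}, UNIV}. pi_RMC p \<nu> x * f x)"

end

theory Submission
  imports Defs "HOL-Analysis.Analysis" "HOL-Computational_Algebra.Polynomial"
begin
section \<open>Generic finite Markov chains\<close>

definition stoch :: "('a::finite \<Rightarrow> 'a \<Rightarrow> real) \<Rightarrow> bool" where
  "stoch P \<longleftrightarrow> (\<forall>x y. 0 \<le> P x y) \<and> (\<forall>x. (\<Sum>y\<in>UNIV. P x y) = 1)"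

definition invar :: "('a::finite \<Rightarrow> 'a \<Rightarrow> real) \<Rightarrow> ('a \<Rightarrow> real) \<Rightarrow> bool" where
  "invar P \<mu> \<longleftrightarrow> (\<forall>y. (\<Sum>x\<in>UNIV. \<mu> x * P x y) = \<mu> y)"

definition posrel :: "('a \<Rightarrow> 'a \<Rightarrow> real) \<Rightarrow> ('a \<times> 'a) set" where
  "posrel P = {(x,y). 0 < P x y}"

lemma invar_abs:
  assumes "stoch P" "invar P \<mu>"
  shows "invar P (\<lambda>x. \<bar>\<mu> x\<bar>)"
proof -
  have P0: "\<And>x y. 0 \<le> P x y" and P1: "\<And>x. (\<Sum>y\<in>UNIV. P x y) = 1"
    using assms(1) by (auto simp: stoch_def)
  define \<nu> where "\<nu> y = (\<Sum>x\<in>UNIV. \<bar>\<mu> x\<bar> * P x y)" for y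
  have le: "\<bar>\<mu> y\<bar> \<le> \<nu> y" for y
  proof -
    have "\<bar>\<mu> y\<bar> = \<bar>\<Sum>x\<in>UNIV. \<mu> x * P x y\<bar>" using assms(2) by (simp add: invar_def)
    also have "\<dots> \<le> (\<Sum>x\<in>UNIV. \<bar>\<mu> x * P x y\<bar>)" by (rule sum_abs)
    also have "\<dots> = \<nu> y" unfolding \<nu>_def using P0 by (simp add: abs_mult)
    finally show ?thesis .
  qed
  have "(\<Sum>y\<in>UNIV. \<nu> y) = (\<Sum>x\<in>UNIV. \<bar>\<mu> x\<bar> * (\<Sum>y\<in>UNIV. P x y))"
    unfolding \<nu>_def sum_distrib_left by (rule sum.swap)
  also have "\<dots> = (\<Sum>x\<in>UNIV. \<bar>\<mu> x\<bar>)" by (simp add: P1)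
  finally have "(\<Sum>y\<in>UNIV. \<nu> y - \<bar>\<mu> y\<bar>) = 0" by (simp add: sum_subtractf)
  hence "\<forall>y\<in>UNIV. \<nu> y - \<bar>\<mu> y\<bar> = 0" using le by (subst sum_nonneg_eq_0_iff[symmetric]) auto
  thus ?thesis unfolding invar_def \<nu>_def by auto
qed

lemma invar_lin:
  assumes "invar P \<mu>" "invar P \<nu>"
  shows "invar P (\<lambda>x. a * \<mu> x + b * \<nu> x)"
proof -
  have "(\<Sum>x\<in>UNIV. (a * \<mu> x + b * \<nu> x) * P x y) = a * (\<Sum>x\<in>UNIV. \<mu> x * P x y) + b * (\<Sum>x\<in>UNIV. \<nu> x * P x y)" for y
    by (simp add: sum.distrib sum_distrib_left ring_distribs mult.assoc)
  thus ?thesis using assms by (simp add: invar_def)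
qed

lemma invar_support:
  assumes "stoch P" "invar P \<pi>" "\<forall>x. 0 \<le> \<pi> x" "0 < \<pi> x" "(x,y) \<in> (posrel P)\<^sup>*"
  shows "0 < \<pi> y"
  using assms(5)
proof (induction rule: rtrancl_induct)
  case base then show ?case using assms(4) .
next
  case (step y z)
  have "\<pi> y * P y z \<le> (\<Sum>x\<in>UNIV. \<pi> x * P x z)"
    by (rule member_le_sum) (use assms(1,3) in \<open>auto simp: stoch_def\<close>)
  also have "\<dots> = \<pi> z" using assms(2) by (simp add: invar_def)
  finally show ?case using step by (simp add: posrel_def) (smt (verit) mult_pos_pos)
qed

lemma invar_zero:
  assumes "stoch P" "\<forall>x. (x,z) \<in> (posrel P)\<^sup>*" "invar P \<mu>" "(\<Sum>x\<in>UNIV. \<mu> x) = 0"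
  shows "\<mu> = (\<lambda>_. 0)"
proof (rule ccontr)
  assume ne: "\<mu> \<noteq> (\<lambda>_. 0)"
  define mp where "mp x = (1/2) * \<bar>\<mu> x\<bar> + (1/2) * \<mu> x" for x
  define mn where "mn x = (1/2) * \<bar>\<mu> x\<bar> + (-1/2) * \<mu> x" for x
  have ia: "invar P (\<lambda>x. \<bar>\<mu> x\<bar>)" by (rule invar_abs[OF assms(1,3)])
  have imp: "invar P mp" unfolding mp_def by (rule invar_lin[OF ia assms(3)])
  have imn: "invar P mn" unfolding mn_def by (rule invar_lin[OF ia assms(3)])
  have mp0: "\<forall>x. 0 \<le> mp x" and mn0: "\<forall>x. 0 \<le> mn x" by (auto simp: mp_def mn_def)
  obtain x0 where x0: "\<mu> x0 \<noteq> 0" using ne by auto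
  have "\<bar>\<mu> x0\<bar> \<le> (\<Sum>x\<in>UNIV. \<bar>\<mu> x\<bar>)" by (rule member_le_sum) auto
  hence spos: "0 < (\<Sum>x\<in>UNIV. \<bar>\<mu> x\<bar>)" using x0 by linarith
  have smp: "(\<Sum>x\<in>UNIV. mp x) = (1/2) * (\<Sum>x\<in>UNIV. \<bar>\<mu> x\<bar>)"
    using assms(4) by (simp only: mp_def sum.distrib sum_distrib_left[symmetric])
  have smn: "(\<Sum>x\<in>UNIV. mn x) = (1/2) * (\<Sum>x\<in>UNIV. \<bar>\<mu> x\<bar>)"
    using assms(4) by (simp only: mn_def sum.distrib sum_distrib_left[symmetric])
  have "\<exists>x. 0 < mp x"
  proof (rule ccontr)
    assume "\<not> ?thesis"
    hence "\<forall>x. mp x \<le> 0" by (simp add: not_less)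
    hence "(\<Sum>x\<in>UNIV. mp x) \<le> 0" by (simp add: sum_nonpos)
    thus False using smp spos by linarith
  qed
  then obtain x1 where x1: "0 < mp x1" by blast
  have "\<exists>x. 0 < mn x"
  proof (rule ccontr)
    assume "\<not> ?thesis"
    hence "\<forall>x. mn x \<le> 0" by (simp add: not_less)
    hence "(\<Sum>x\<in>UNIV. mn x) \<le> 0" by (simp add: sum_nonpos)
    thus False using smn spos by linarith
  qed
  then obtain x2 where x2: "0 < mn x2" by blast
  have "0 < mp z" by (rule invar_support[OF assms(1) imp mp0 x1]) (use assms(2) in auto)
  moreover have "0 < mn z" by (rule invar_support[OF assms(1) imn mn0 x2]) (use assms(2) in auto)
  ultimately show False unfolding mp_def mn_def by linarith
qed

lemma stoch_stationary_exists:
  fixes P :: "'a::finite \<Rightarrow> 'a \<Rightarrow> real"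
  assumes "stoch P"
  shows "\<exists>\<pi>. (\<forall>x. 0 \<le> \<pi> x) \<and> (\<Sum>x\<in>UNIV. \<pi> x) = 1 \<and> invar P \<pi>"
proof -
  have P0: "\<And>x y. 0 \<le> P x y" and P1: "\<And>x. (\<Sum>y\<in>UNIV. P x y) = 1"
    using assms(1) by (auto simp: stoch_def)
  define S where "S = {v::real^'a. (\<forall>i. 0 \<le> v$i) \<and> (\<Sum>i\<in>UNIV. v$i) = 1}"
  define f where "f v = (\<chi> y. \<Sum>x\<in>UNIV. v$x * P x y)" for v :: "real^'a"
  have cl: "closed S" unfolding S_def
    by (intro closed_Collect_conj closed_Collect_all closed_Collect_le closed_Collect_eq continuous_intros)
  have bd: "bounded S"
  proof -
    have "norm v \<le> 1" if "v \<in> S" for v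
    proof -
      have "norm v \<le> (\<Sum>i\<in>UNIV. \<bar>v$i\<bar>)" by (rule norm_le_l1_cart)
      also have "\<dots> = 1" using that by (simp add: S_def)
      finally show ?thesis .
    qed
    thus ?thesis by (auto simp: bounded_iff)
  qed
  have cpt: "compact S" using cl bd by (simp add: compact_eq_bounded_closed)
  have cvx: "convex S"
    unfolding convex_def S_def
    by (auto simp: sum.distrib sum_distrib_left[symmetric] intro!: add_nonneg_nonneg mult_nonneg_nonneg)
  have ne: "S \<noteq> {}"
  proof -
    have "(\<chi> i. 1 / real CARD('a)) \<in> S" by (simp add: S_def)
    thus ?thesis by auto
  qed
  have ct: "continuous_on S f" unfolding f_def
    by (intro continuous_on_vec_lambda continuous_intros)
  have fim: "f \<in> S \<rightarrow> S"
  proof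
    fix v assume v: "v \<in> S"
    have "(\<Sum>y\<in>UNIV. \<Sum>x\<in>UNIV. v$x * P x y) = (\<Sum>x\<in>UNIV. v$x * (\<Sum>y\<in>UNIV. P x y))"
      unfolding sum_distrib_left by (rule sum.swap)
    also have "\<dots> = 1" using v by (simp add: P1 S_def)
    finally show "f v \<in> S" using v P0 by (auto simp: S_def f_def intro!: sum_nonneg)
  qed
  obtain v where "v \<in> S" "f v = v" using brouwer[OF cpt cvx ne ct fim] by blast
  thus ?thesis
    by (intro exI[of _ "\<lambda>x. v$x"]) (auto simp: S_def f_def invar_def vec_eq_iff)
qed

lemma stoch_stationary_unique:
  assumes "stoch P" "\<forall>x. (x,z) \<in> (posrel P)\<^sup>*"
  shows "\<exists>!\<pi>. (\<forall>x. 0 \<le> \<pi> x) \<and> (\<Sum>x\<in>UNIV. \<pi> x) = 1 \<and> invar P \<pi>"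
proof -
  obtain \<pi> where \<pi>: "(\<forall>x. 0 \<le> \<pi> x) \<and> (\<Sum>x\<in>UNIV. \<pi> x) = 1 \<and> invar P \<pi>"
    using stoch_stationary_exists[OF assms(1)] by blast
  have "\<rho> = \<pi>" if \<rho>: "(\<forall>x. 0 \<le> \<rho> x) \<and> (\<Sum>x\<in>UNIV. \<rho> x) = 1 \<and> invar P \<rho>" for \<rho>
  proof -
    have "invar P (\<lambda>x. 1 * \<rho> x + (-1) * \<pi> x)" using \<rho> \<pi> by (intro invar_lin) auto
    moreover have "(\<Sum>x\<in>UNIV. 1 * \<rho> x + (-1) * \<pi> x) = 0" using \<rho> \<pi> by (simp add: sum_subtractf)
    ultimately have h: "(\<lambda>x. 1 * \<rho> x + (-1) * \<pi> x) = (\<lambda>_. 0)" by (rule invar_zero[OF assms])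
    show ?thesis
    proof
      fix x show "\<rho> x = \<pi> x" using fun_cong[OF h, of x] by simp
    qed
  qed
  thus ?thesis using \<pi> by blast
qed

lemma invar_multiple:
  assumes "stoch P" "\<forall>x. (x,z) \<in> (posrel P)\<^sup>*"
    and \<pi>: "(\<forall>x. 0 \<le> \<pi> x) \<and> (\<Sum>x\<in>UNIV. \<pi> x) = 1 \<and> invar P \<pi>"
    and "invar P \<mu>"
  shows "\<mu> = (\<lambda>x. (\<Sum>y\<in>UNIV. \<mu> y) * \<pi> x)"
proof -
  let ?s = "\<Sum>y\<in>UNIV. \<mu> y"
  have "invar P (\<lambda>x. 1 * \<mu> x + (- ?s) * \<pi> x)" using \<pi> assms(4) by (intro invar_lin) auto
  moreover have "(\<Sum>x\<in>UNIV. 1 * \<mu> x + (- ?s) * \<pi> x) = 0" using \<pi>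
    by (simp only: sum.distrib sum_distrib_left[symmetric])
  ultimately have h: "(\<lambda>x. 1 * \<mu> x + (- ?s) * \<pi> x) = (\<lambda>_. 0)" by (rule invar_zero[OF assms(1,2)])
  show ?thesis
  proof
    fix x show "\<mu> x = ?s * \<pi> x" using fun_cong[OF h, of x] by simp
  qed
qed

lemma sum_prod_bool:
  fixes f :: "'a::finite \<Rightarrow> bool \<Rightarrow> real"
  shows "(\<Sum>y\<in>UNIV. \<Prod>g\<in>UNIV. f g (g \<in> y)) = (\<Prod>g\<in>UNIV. f g True + f g False)"
proof -
  have "(\<Prod>g\<in>UNIV. f g True + f g False) =
        (\<Sum>X\<in>Pow UNIV. (\<Prod>g\<in>X. f g True) * (\<Prod>g\<in>UNIV-X. f g False))"
    by (rule prod_add) simp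
  also have "\<dots> = (\<Sum>y\<in>UNIV. \<Prod>g\<in>UNIV. f g (g \<in> y))"
  proof (rule sum.cong)
    fix X :: "'a set"
    have "(\<Prod>g\<in>UNIV. f g (g\<in>X)) = (\<Prod>g\<in>UNIV-X. f g (g\<in>X)) * (\<Prod>g\<in>X. f g (g\<in>X))"
      by (rule prod.subset_diff) auto
    also have "\<dots> = (\<Prod>g\<in>X. f g True) * (\<Prod>g\<in>UNIV-X. f g False)"
      by (simp add: mult.commute)
    finally show "(\<Prod>g\<in>X. f g True) * (\<Prod>g\<in>UNIV-X. f g False) = (\<Prod>g\<in>UNIV. f g (g\<in>X))" by simp
  qed simp
  finally show ?thesis by simp
qed

section \<open>Polynomials\<close>

lemma det_poly_eval:
  fixes A :: "real poly^'n^'n"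
  shows "det (\<chi> i j. poly (A$i$j) u) = poly (det A) u"
  unfolding det_def by (simp add: poly_sum poly_prod)

lemma poly_decomp0:
  fixes P :: "real poly"
  assumes "P \<noteq> 0"
  obtains j P1 where "\<And>u. poly P u = u ^ j * poly P1 u" "poly P1 0 \<noteq> 0"
proof -
  obtain q where q: "P = [:- 0, 1:] ^ order 0 P * q" "\<not> [:- 0, 1:] dvd q"
    using order_decomp[OF assms] by blast
  have "poly q 0 \<noteq> 0" using q(2) by (simp add: poly_eq_0_iff_dvd)
  moreover have "poly P u = u ^ order 0 P * poly q u" for u
    by (subst q(1)) (simp add: poly_power)
  ultimately show ?thesis using that by blast
qed

lemma poly_ratio_limit:
  fixes P Q :: "real poly"
  assumes Qnz: "\<And>u. 0 < u \<Longrightarrow> u \<le> 1 \<Longrightarrow> poly Q u \<noteq> 0"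
    and bnd: "\<And>u. 0 < u \<Longrightarrow> u \<le> 1 \<Longrightarrow> \<bar>poly P u / poly Q u\<bar> \<le> B"
  shows "\<exists>L. ((\<lambda>u. poly P u / poly Q u) \<longlongrightarrow> L) (at_right 0)"
proof (cases "P = 0")
  case True thus ?thesis by (auto intro!: exI[of _ 0])
next
  case False
  have "Q \<noteq> 0" using Qnz[of 1] by auto
  obtain j P1 where P1: "\<And>u. poly P u = u ^ j * poly P1 u" "poly P1 0 \<noteq> 0"
    using poly_decomp0[OF False] by blast
  obtain k Q1 where Q1: "\<And>u. poly Q u = u ^ k * poly Q1 u" "poly Q1 0 \<noteq> 0"
    using poly_decomp0[OF \<open>Q \<noteq> 0\<close>] by blast
  have ev: "eventually (\<lambda>u. 0 < u \<and> u < 1) (at_right (0::real))"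
    unfolding eventually_at_right_field by (auto intro!: exI[of _ 1])
  have Q1nz: "poly Q1 u \<noteq> 0" if "0 < u" "u < 1" for u
    using Qnz[of u] that Q1(1)[of u] by auto
  have g: "((\<lambda>u. poly P1 u / poly Q1 u) \<longlongrightarrow> poly P1 0 / poly Q1 0) (at_right 0)"
    by (intro tendsto_intros) (use Q1(2) in auto)
  show ?thesis
  proof (cases "k \<le> j")
    case True
    have lim: "((\<lambda>u. u^(j-k) * (poly P1 u / poly Q1 u)) \<longlongrightarrow> 0^(j-k) * (poly P1 0 / poly Q1 0)) (at_right 0)"
      by (intro tendsto_intros g)
    have "eventually (\<lambda>u. u^(j-k) * (poly P1 u / poly Q1 u) = poly P u / poly Q u) (at_right 0)"
      using ev
    proof eventually_elim
      case (elim u)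
      have "u ^ j = u^(j-k) * u^k" using True by (metis le_add_diff_inverse2 power_add)
      thus ?case using elim Q1nz[of u] by (simp add: P1(1) Q1(1))
    qed
    thus ?thesis using Lim_transform_eventually[OF lim] by (intro exI[of _ "0^(j-k) * (poly P1 0 / poly Q1 0)"])
  next
    case False
    define c where "c = poly P1 0 / poly Q1 0"
    have c0: "c \<noteq> 0" using P1(2) Q1(2) by (simp add: c_def)
    have "((\<lambda>u. \<bar>poly P1 u / poly Q1 u\<bar>) \<longlongrightarrow> \<bar>c\<bar>) (at_right 0)"
      unfolding c_def by (intro tendsto_intros g)
    hence e1: "eventually (\<lambda>u. \<bar>c\<bar>/2 < \<bar>poly P1 u / poly Q1 u\<bar>) (at_right 0)"
      by (rule order_tendstoD(1)) (use c0 in simp)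
    have e2: "eventually (\<lambda>u. u < \<bar>c\<bar> / (2*(\<bar>B\<bar>+1))) (at_right (0::real))"
      unfolding eventually_at_right_field using c0
      by (auto intro!: exI[of _ "\<bar>c\<bar> / (2*(\<bar>B\<bar>+1))"])
    have "eventually (\<lambda>u. (0 < u \<and> u < 1) \<and> \<bar>c\<bar>/2 < \<bar>poly P1 u / poly Q1 u\<bar> \<and> u < \<bar>c\<bar> / (2*(\<bar>B\<bar>+1))) (at_right (0::real))"
      using ev e1 e2 by eventually_elim auto
    hence "at_right (0::real) = bot \<or> (\<exists>u. (0 < u \<and> u < 1) \<and> \<bar>c\<bar>/2 < \<bar>poly P1 u / poly Q1 u\<bar> \<and> u < \<bar>c\<bar> / (2*(\<bar>B\<bar>+1)))"
      by (rule eventually_happens)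
    then obtain u where u: "0 < u" "u < 1" "\<bar>c\<bar>/2 < \<bar>poly P1 u / poly Q1 u\<bar>" "u < \<bar>c\<bar> / (2*(\<bar>B\<bar>+1))"
      using trivial_limit_at_right_real unfolding trivial_limit_def by blast
    define G where "G = \<bar>poly P1 u / poly Q1 u\<bar>"
    have kj: "k = j + (k - j)" "1 \<le> k - j" using False by auto
    have "poly P u / poly Q u = (poly P1 u / poly Q1 u) / u^(k-j)"
    proof -
      have "u^k = u^j * u^(k-j)" by (metis kj(1) power_add)
      thus ?thesis using u Q1nz[of u] by (simp add: P1(1) Q1(1))
    qed
    hence eq: "\<bar>poly P u / poly Q u\<bar> = G / u^(k-j)" using u(1) by (simp add: G_def abs_mult)
    have up: "u^(k-j) \<le> u" using u kj(2)
      by (metis power_decreasing power_one_right less_eq_real_def)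
    have up0: "0 < u^(k-j)" using u by simp
    have "G / u \<le> G / u^(k-j)" using up up0 by (intro divide_left_mono) (auto simp: G_def)
    moreover have "\<bar>c\<bar>/2 / u < G / u" using u by (intro divide_strict_right_mono) (auto simp: G_def)
    moreover have "\<bar>B\<bar> + 1 < \<bar>c\<bar>/2 / u"
    proof -
      have "u * (2*(\<bar>B\<bar>+1)) < \<bar>c\<bar>" using u(4) by (simp add: field_simps)
      thus ?thesis using u(1) by (simp add: field_simps)
    qed
    ultimately have "B < \<bar>poly P u / poly Q u\<bar>" using eq by linarith
    thus ?thesis using bnd[of u] u by linarith
  qed
qed

lemma finite_events: "finite (events :: ('g::finite) event set)"
  by (rule finite_subset[OF subset_UNIV]) simp

definition stepf :: "'g event \<Rightarrow> 'g set \<Rightarrow> 'g set" where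
  "stepf e x = {h. snd e h \<in> x}"

primrec steps :: "'g event list \<Rightarrow> 'g set \<Rightarrow> 'g set" where
  "steps [] x = x"
| "steps (e # es) x = steps es (stepf e x)"

lemma steps_eq: "steps es x = {h. foldr (\<circ>) (map snd es) id h \<in> x}"
  by (induction es arbitrary: x) (auto simp: stepf_def)

lemma foldr_fix:
  assumes "\<forall>e\<in>set l. e \<in> events \<and> h \<notin> fst e"
  shows "foldr (\<circ>) (map snd l) id h = h"
  using assms by (induction l) (auto simp: events_def)

locale model =
  fixes p :: "('g::finite) set \<Rightarrow> 'g event \<Rightarrow> real" and \<nu> :: real
  assumes rr: "replacement_rule p" and fa: "fixation_axiom p" and a1: "assumption1 p"
    and nu0: "0 < \<nu>" and nu1: "\<nu> < 1"
begin

abbreviation T where "T u x y \<equiv> trans p \<nu> u x y"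
abbreviation TP where "TP u t x y \<equiv> trans_pow p \<nu> u t x y"

lemma p_nonneg: "0 \<le> p x e" using rr unfolding replacement_rule_def by (cases e) auto
lemma p_out: "e \<notin> events \<Longrightarrow> p x e = 0" using rr unfolding replacement_rule_def by (cases e) auto
lemma p_sum: "(\<Sum>e\<in>events. p x e) = 1" using rr by (simp add: replacement_rule_def)

lemma events_id: "e \<in> events \<Longrightarrow> h \<notin> fst e \<Longrightarrow> snd e h = h"
  by (auto simp: events_def)

definition sfb :: "real \<Rightarrow> 'g event \<Rightarrow> 'g set \<Rightarrow> 'g \<Rightarrow> bool \<Rightarrow> real" where
  "sfb u e x g b = (if g \<in> fst e then (1-u) * (if (snd e g \<in> x) = b then 1 else 0) + (if b then u*\<nu> else u*(1-\<nu>))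
     else (if (g\<in>x) = b then 1 else 0))"

lemma site_factor_sfb: "site_factor u \<nu> e x y g = sfb u e x g (g \<in> y)"
  by (simp add: site_factor_def sfb_def)

lemma T_def2: "T u x y = (\<Sum>e\<in>events. p x e * (\<Prod>g\<in>UNIV. sfb u e x g (g \<in> y)))"
  by (simp add: trans_def site_factor_sfb)

lemma sfb_sum: "sfb u e x g True + sfb u e x g False = 1"
  by (simp add: sfb_def algebra_simps)

lemma sfb_nonneg: "0 \<le> u \<Longrightarrow> u \<le> 1 \<Longrightarrow> 0 \<le> sfb u e x g b"
  using nu0 nu1 by (auto simp: sfb_def intro!: add_nonneg_nonneg mult_nonneg_nonneg)

lemma T_nonneg: "0 \<le> u \<Longrightarrow> u \<le> 1 \<Longrightarrow> 0 \<le> T u x y"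
  unfolding T_def2 by (intro sum_nonneg mult_nonneg_nonneg p_nonneg prod_nonneg sfb_nonneg) auto

lemma T_rowsum: "(\<Sum>y\<in>UNIV. T u x y) = 1"
proof -
  have "(\<Sum>y\<in>UNIV. T u x y) = (\<Sum>e\<in>events. p x e * (\<Sum>y\<in>UNIV. \<Prod>g\<in>UNIV. sfb u e x g (g \<in> y)))"
    unfolding T_def2 sum_distrib_left by (rule sum.swap)
  also have "\<dots> = (\<Sum>e\<in>events. p x e)" by (simp add: sum_prod_bool sfb_sum)
  finally show ?thesis by (simp add: p_sum)
qed

lemma T_stoch: "0 \<le> u \<Longrightarrow> u \<le> 1 \<Longrightarrow> stoch (T u)"
  by (simp add: stoch_def T_nonneg T_rowsum)

lemma T_marg: "(\<Sum>y\<in>UNIV. T u x y * (if g \<in> y then 1 else 0)) = (\<Sum>e\<in>events. p x e * sfb u e x g True)"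
proof -
  define f where "f e k b = (if k = g \<and> \<not> b then 0 else sfb u e x k b)" for e k b
  have pr: "(\<Prod>k\<in>UNIV. sfb u e x k (k \<in> y)) * (if g \<in> y then 1 else 0) = (\<Prod>k\<in>UNIV. f e k (k \<in> y))" for e y
  proof (cases "g \<in> y")
    case True thus ?thesis by (auto simp: f_def intro!: prod.cong)
  next
    case False
    hence "(\<Prod>k\<in>UNIV. f e k (k \<in> y)) = 0" by (intro prod_zero) (auto simp: f_def intro!: bexI[of _ g])
    thus ?thesis using False by simp
  qed
  have sm: "(\<Sum>y\<in>UNIV. \<Prod>k\<in>UNIV. f e k (k \<in> y)) = sfb u e x g True" for e
  proof -
    have "(\<Sum>y\<in>UNIV. \<Prod>k\<in>UNIV. f e k (k \<in> y)) = (\<Prod>k\<in>UNIV. f e k True + f e k False)"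
      by (rule sum_prod_bool)
    also have "\<dots> = (\<Prod>k\<in>UNIV. if k = g then sfb u e x g True else 1)"
      by (intro prod.cong) (auto simp: f_def sfb_sum)
    also have "\<dots> = sfb u e x g True" by simp
    finally show ?thesis .
  qed
  have "(\<Sum>y\<in>UNIV. T u x y * (if g \<in> y then 1 else 0))
      = (\<Sum>y\<in>UNIV. \<Sum>e\<in>events. p x e * ((\<Prod>k\<in>UNIV. sfb u e x k (k \<in> y)) * (if g \<in> y then 1 else 0)))"
    unfolding T_def2 sum_distrib_right by (simp only: mult.assoc)
  also have "\<dots> = (\<Sum>y\<in>UNIV. \<Sum>e\<in>events. p x e * (\<Prod>k\<in>UNIV. f e k (k \<in> y)))"
    by (simp only: pr)
  also have "\<dots> = (\<Sum>e\<in>events. p x e * (\<Sum>y\<in>UNIV. \<Prod>k\<in>UNIV. f e k (k \<in> y)))"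
    unfolding sum_distrib_left by (rule sum.swap)
  also have "\<dots> = (\<Sum>e\<in>events. p x e * sfb u e x g True)" by (simp only: sm)
  finally show ?thesis .
qed

lemma e_rate_alt: "e_rate p h g x = (\<Sum>e\<in>events. if g \<in> fst e \<and> snd e g = h then p x e else 0)"
proof -
  have "{(R, \<alpha>). (R, \<alpha>) \<in> events \<and> g \<in> R \<and> \<alpha> g = h} = {e \<in> events. g \<in> fst e \<and> snd e g = h}" by auto
  thus ?thesis unfolding e_rate_def by (simp add: sum.inter_filter[OF finite_events])
qed

lemma e_rate_sum: "(\<Sum>h\<in>UNIV. e_rate p h g x * \<phi> h) = (\<Sum>e\<in>events. p x e * (if g \<in> fst e then \<phi> (snd e g) else 0))"
proof -
  have "(\<Sum>h\<in>UNIV. e_rate p h g x * \<phi> h) = (\<Sum>h\<in>UNIV. \<Sum>e\<in>events. if g \<in> fst e \<and> snd e g = h then p x e * \<phi> h else 0)"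
    by (auto simp: e_rate_alt sum_distrib_right intro!: sum.cong)
  also have "\<dots> = (\<Sum>e\<in>events. \<Sum>h\<in>UNIV. if g \<in> fst e \<and> snd e g = h then p x e * \<phi> h else 0)"
    by (rule sum.swap)
  also have "\<dots> = (\<Sum>e\<in>events. p x e * (if g \<in> fst e then \<phi> (snd e g) else 0))"
  proof (rule sum.cong)
    fix e :: "'g event"
    show "(\<Sum>h\<in>UNIV. if g \<in> fst e \<and> snd e g = h then p x e * \<phi> h else 0) = p x e * (if g \<in> fst e then \<phi> (snd e g) else 0)"
    proof (cases "g \<in> fst e")
      case True thus ?thesis by simp
    next
      case False thus ?thesis by simp
    qed
  qed simp
  finally show ?thesis .
qed

lemma d_rate_alt: "d_rate p g x = (\<Sum>e\<in>events. p x e * (if g \<in> fst e then 1 else 0))"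
  using e_rate_sum[of g x "\<lambda>_. 1"] by (simp add: d_rate_def)

lemma sum_lin3:
  "(\<Sum>e\<in>A. a * f e + b * g e + c * (h e - g e)) = a * sum f A + b * sum g A + c * (sum h A - sum g A)"
  for a b c :: real
  by (simp add: sum.distrib sum_subtractf sum_distrib_left right_diff_distrib)

lemma T_marg2:
  "(\<Sum>y\<in>UNIV. T u x y * (if g \<in> y then 1 else 0)) =
     (1-u) * (\<Sum>h\<in>UNIV. e_rate p h g x * (if h \<in> x then 1 else 0)) + u*\<nu> * d_rate p g x
     + (if g \<in> x then 1 else 0) * (1 - d_rate p g x)"
proof -
  have each: "p x e * sfb u e x g True =
     (1-u) * (p x e * (if g \<in> fst e then (if snd e g \<in> x then 1 else 0) else 0))
     + u*\<nu> * (p x e * (if g \<in> fst e then 1 else 0))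
     + (if g \<in> x then 1 else 0) * (p x e - p x e * (if g \<in> fst e then 1 else 0))" for e
    by (simp add: sfb_def algebra_simps)
  have s1: "(\<Sum>e\<in>events. p x e * (if g \<in> fst e then (if snd e g \<in> x then 1 else 0) else 0))
      = (\<Sum>h\<in>UNIV. e_rate p h g x * (if h \<in> x then 1 else 0))"
    using e_rate_sum[of g x "\<lambda>h. if h \<in> x then 1 else 0"] by simp
  have s2: "(\<Sum>e\<in>events. p x e * (if g \<in> fst e then 1 else 0)) = d_rate p g x"
    by (simp add: d_rate_alt)
  show ?thesis
    unfolding T_marg each sum_lin3 s1 s2 p_sum ..
qed

definition Bw :: "('g \<Rightarrow> real) \<Rightarrow> 'g set \<Rightarrow> real" where
  "Bw w x = (\<Sum>h\<in>x. \<Sum>g\<in>UNIV. e_rate p h g x * w g)"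
definition Dw :: "('g \<Rightarrow> real) \<Rightarrow> 'g set \<Rightarrow> real" where
  "Dw w x = (\<Sum>g\<in>x. w g * d_rate p g x)"
definition Nw :: "('g \<Rightarrow> real) \<Rightarrow> 'g set \<Rightarrow> real" where
  "Nw w x = (\<Sum>g\<in>UNIV. w g * d_rate p g x)"

lemma sum_in_ind: "(\<Sum>g\<in>y. w g) = (\<Sum>g\<in>UNIV. w g * (if g \<in> y then 1 else 0))"
  for w :: "'g \<Rightarrow> real"
proof -
  have "(\<Sum>g\<in>UNIV. w g * (if g \<in> y then 1 else 0)) = (\<Sum>g\<in>UNIV. if g \<in> y then w g else 0)"
    by (intro sum.cong) auto
  also have "\<dots> = sum w (UNIV \<inter> y)" by (rule sum.inter_restrict[symmetric]) simp
  finally show ?thesis by simp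
qed

lemma drift:
  "(\<Sum>y\<in>UNIV. T u x y * (\<Sum>g\<in>y. w g)) - (\<Sum>g\<in>x. w g) = (Bw w x - Dw w x) - u * (Bw w x - \<nu> * Nw w x)"
proof -
  have "(\<Sum>y\<in>UNIV. T u x y * (\<Sum>g\<in>y. w g)) = (\<Sum>g\<in>UNIV. w g * (\<Sum>y\<in>UNIV. T u x y * (if g \<in> y then 1 else 0)))"
  proof -
    have eq1: "T u x y * (\<Sum>g\<in>y. w g) = (\<Sum>g\<in>UNIV. w g * (T u x y * (if g \<in> y then 1 else 0)))" for y
      by (subst sum_in_ind[where y=y and w=w]) (simp add: sum_distrib_left algebra_simps)
    have "(\<Sum>y\<in>UNIV. T u x y * (\<Sum>g\<in>y. w g)) = (\<Sum>y\<in>UNIV. \<Sum>g\<in>UNIV. w g * (T u x y * (if g \<in> y then 1 else 0)))"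
      by (rule sum.cong[OF refl eq1])
    also have "\<dots> = (\<Sum>g\<in>UNIV. \<Sum>y\<in>UNIV. w g * (T u x y * (if g \<in> y then 1 else 0)))"
      by (rule sum.swap)
    finally show ?thesis by (simp add: sum_distrib_left)
  qed
  also have "\<dots> = (1-u) * (\<Sum>g\<in>UNIV. w g * (\<Sum>h\<in>UNIV. e_rate p h g x * (if h \<in> x then 1 else 0)))
       + u*\<nu> * Nw w x + (\<Sum>g\<in>UNIV. w g * (if g \<in> x then 1 else 0)) - Dw w x"
  proof -
    have "Dw w x = (\<Sum>g\<in>UNIV. w g * (if g \<in> x then 1 else 0) * d_rate p g x)"
      unfolding Dw_def by (subst sum_in_ind) (simp add: algebra_simps)
    thus ?thesis unfolding T_marg2 Nw_def
      by (simp add: algebra_simps sum.distrib sum_distrib_left sum_subtractf)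
  qed
  also have "(\<Sum>g\<in>UNIV. w g * (\<Sum>h\<in>UNIV. e_rate p h g x * (if h \<in> x then 1 else 0))) = Bw w x"
  proof -
    have "(\<Sum>g\<in>UNIV. w g * (\<Sum>h\<in>UNIV. e_rate p h g x * (if h \<in> x then 1 else 0)))
        = (\<Sum>h\<in>UNIV. (if h \<in> x then 1 else 0) * (\<Sum>g\<in>UNIV. e_rate p h g x * w g))"
      unfolding sum_distrib_left by (subst sum.swap) (simp add: algebra_simps)
    also have "\<dots> = Bw w x" unfolding Bw_def by (subst (2) sum_in_ind) (simp add: algebra_simps)
    finally show ?thesis .
  qed
  finally show ?thesis by (simp add: sum_in_ind[symmetric] algebra_simps)
qed

lemma Delta_sel_Bw: "Delta_sel p x = Bw (\<lambda>_. 1) x - Dw (\<lambda>_. 1) x"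
  by (simp add: Delta_sel_def Bw_def Dw_def b_rate_def sum_subtractf)

lemma Delta_sel_hat_Bw: "Delta_sel_hat p x = Bw (repro_values p) x - Dw (repro_values p) x"
  by (simp add: Delta_sel_hat_def Bw_def Dw_def b_hat_def d_hat_def sum_subtractf)

lemma invar_expect:
  assumes "invar (T u) \<pi>"
  shows "(\<Sum>x\<in>UNIV. \<pi> x * (\<Sum>y\<in>UNIV. T u x y * f y)) = (\<Sum>y\<in>UNIV. \<pi> y * f y)"
proof -
  have "(\<Sum>x\<in>UNIV. \<pi> x * (\<Sum>y\<in>UNIV. T u x y * f y)) = (\<Sum>y\<in>UNIV. (\<Sum>x\<in>UNIV. \<pi> x * T u x y) * f y)"
    unfolding sum_distrib_left sum_distrib_right by (subst sum.swap) (simp add: mult.assoc)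
  also have "\<dots> = (\<Sum>y\<in>UNIV. \<pi> y * f y)" using assms by (simp add: invar_def)
  finally show ?thesis .
qed

lemma sum_lin2: "(\<Sum>x\<in>A. \<pi> x * (a x - u * b x)) = (\<Sum>x\<in>A. \<pi> x * a x) - u * (\<Sum>x\<in>A. \<pi> x * b x)"
  for a b \<pi> :: "'a \<Rightarrow> real"
  by (simp add: right_diff_distrib sum_subtractf sum_distrib_left mult.left_commute)

lemma stat_drift:
  assumes "invar (T u) \<pi>"
  shows "(\<Sum>x\<in>UNIV. \<pi> x * (Bw w x - Dw w x)) = u * (\<Sum>x\<in>UNIV. \<pi> x * (Bw w x - \<nu> * Nw w x))"
proof -
  have "(\<Sum>x\<in>UNIV. \<pi> x * ((\<Sum>y\<in>UNIV. T u x y * (\<Sum>g\<in>y. w g)) - (\<Sum>g\<in>x. w g))) = 0"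
    using invar_expect[OF assms, of "\<lambda>y. \<Sum>g\<in>y. w g"] by (simp add: right_diff_distrib sum_subtractf)
  hence "(\<Sum>x\<in>UNIV. \<pi> x * ((Bw w x - Dw w x) - u * (Bw w x - \<nu> * Nw w x))) = 0"
    unfolding drift .
  thus ?thesis unfolding sum_lin2 by simp
qed

end

lemma sum_ind_r: "(\<Sum>z\<in>(UNIV::'a::finite set). f z * (if z = y then 1 else 0)) = (f y :: real)"
proof -
  have "(\<Sum>z\<in>(UNIV::'a set). f z * (if z = y then 1 else 0)) = (\<Sum>z\<in>UNIV. if z = y then f z else 0)"
    by (rule sum.cong) auto
  also have "\<dots> = f y" by (simp add: sum.delta)
  finally show ?thesis .
qed

lemma sum_ind_l: "(\<Sum>z\<in>(UNIV::'a::finite set). (if x = z then 1 else 0) * f z) = (f x :: real)"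
proof -
  have "(\<Sum>z\<in>(UNIV::'a set). (if x = z then 1 else 0) * f z) = (\<Sum>z\<in>UNIV. if z = x then f z else 0)"
    by (rule sum.cong) auto
  also have "\<dots> = f x" by (simp add: sum.delta)
  finally show ?thesis .
qed

lemma sum_ind_l2: "(\<Sum>z\<in>(UNIV::'a::finite set). (if z = x then 1 else 0) * f z) = (f x :: real)"
proof -
  have "(\<Sum>z\<in>(UNIV::'a set). (if z = x then 1 else 0) * f z) = (\<Sum>z\<in>UNIV. if z = x then f z else 0)"
    by (rule sum.cong) auto
  also have "\<dots> = f x" by (simp add: sum.delta)
  finally show ?thesis .
qed

context model begin

definition mnu :: real where "mnu = min \<nu> (1-\<nu>)"
lemma mnu_pos: "0 < mnu" and mnu_le1: "mnu \<le> 1" using nu0 nu1 by (auto simp: mnu_def)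

lemma sfb_lb_match:
  assumes "e \<in> events" "0 \<le> u" "u \<le> 1" "b = (snd e k \<in> x)"
  shows "mnu \<le> sfb u e x k b"
proof (cases "k \<in> fst e")
  case True
  have "0 \<le> (1-u)*(1-mnu)" using assms(3) mnu_le1 by (intro mult_nonneg_nonneg) auto
  moreover have "(1-u)*(1-mnu) = (1-u)*1 + u*mnu - mnu" by (simp add: algebra_simps)
  moreover have "u * mnu \<le> (if b then u*\<nu> else u*(1-\<nu>))"
    using assms(2) by (auto simp: mnu_def intro: mult_left_mono)
  moreover have "sfb u e x k b = (1-u)*1 + (if b then u*\<nu> else u*(1-\<nu>))"
    using True assms(4) by (simp add: sfb_def)
  ultimately show ?thesis by linarith
next
  case False
  have "snd e k = k" by (rule events_id[OF assms(1) False])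
  thus ?thesis using False assms(4) mnu_le1 by (simp add: sfb_def)
qed

lemma sfb_lb_mis:
  assumes "k \<in> fst e" "0 \<le> u" "u \<le> 1"
  shows "u * mnu \<le> sfb u e x k b"
proof -
  have "0 \<le> (1-u) * (if (snd e k \<in> x) = b then 1 else 0)" using assms by simp
  moreover have "u * mnu \<le> (if b then u*\<nu> else u*(1-\<nu>))"
    using assms(2) by (auto simp: mnu_def intro: mult_left_mono)
  moreover have "sfb u e x k b = (1-u) * (if (snd e k \<in> x) = b then 1 else 0) + (if b then u*\<nu> else u*(1-\<nu>))"
    using assms(1) by (simp add: sfb_def)
  ultimately show ?thesis by linarith
qed

lemma T_lb1:
  assumes e: "e \<in> events" and u: "0 \<le> u" "u \<le> 1" and g: "g \<in> fst e"
    and y: "\<forall>h. h \<noteq> g \<longrightarrow> (h \<in> y \<longleftrightarrow> h \<in> stepf e x)"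
  shows "p x e * (mnu ^ CARD('g) * u) \<le> T u x y"
proof -
  have "(\<Prod>k\<in>UNIV. mnu * (if k = g then u else 1)) \<le> (\<Prod>k\<in>UNIV. sfb u e x k (k \<in> y))"
  proof (rule prod_mono)
    fix k :: 'g
    show "0 \<le> mnu * (if k = g then u else 1) \<and> mnu * (if k = g then u else 1) \<le> sfb u e x k (k \<in> y)"
    proof (cases "k = g")
      case True thus ?thesis using sfb_lb_mis[OF g u, of x "g \<in> y"] mnu_pos u by (simp add: mult.commute)
    next
      case False
      hence "(k \<in> y) = (snd e k \<in> x)" using y by (simp add: stepf_def)
      thus ?thesis using sfb_lb_match[OF e u] mnu_pos False by simp
    qed
  qed
  moreover have "(\<Prod>k\<in>UNIV. mnu * (if k = g then u else 1)) = mnu ^ CARD('g) * u"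
    by (simp add: prod.distrib)
  ultimately have A: "mnu ^ CARD('g) * u \<le> (\<Prod>k\<in>UNIV. sfb u e x k (k \<in> y))" by simp
  have "p x e * (mnu ^ CARD('g) * u) \<le> p x e * (\<Prod>k\<in>UNIV. sfb u e x k (k \<in> y))"
    by (rule mult_left_mono[OF A p_nonneg])
  also have "\<dots> \<le> T u x y" unfolding T_def2
    by (rule member_le_sum[OF e]) (auto intro!: mult_nonneg_nonneg p_nonneg prod_nonneg sfb_nonneg u)
  finally show ?thesis .
qed

lemma T_lb0:
  assumes e: "e \<in> events" and u: "0 \<le> u" "u \<le> 1"
  shows "p x e * mnu ^ CARD('g) \<le> T u x (stepf e x)"
proof -
  have "(\<Prod>k\<in>(UNIV::'g set). mnu) \<le> (\<Prod>k\<in>UNIV. sfb u e x k (k \<in> stepf e x))"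
  proof (rule prod_mono)
    fix k :: 'g
    show "0 \<le> mnu \<and> mnu \<le> sfb u e x k (k \<in> stepf e x)"
      using sfb_lb_match[OF e u, of "k \<in> stepf e x" k x] mnu_pos by (simp add: stepf_def)
  qed
  hence A: "mnu ^ CARD('g) \<le> (\<Prod>k\<in>UNIV. sfb u e x k (k \<in> stepf e x))" by simp
  have "p x e * mnu ^ CARD('g) \<le> p x e * (\<Prod>k\<in>UNIV. sfb u e x k (k \<in> stepf e x))"
    by (rule mult_left_mono[OF A p_nonneg])
  also have "\<dots> \<le> T u x (stepf e x)" unfolding T_def2
    by (rule member_le_sum[OF e]) (auto intro!: mult_nonneg_nonneg p_nonneg prod_nonneg sfb_nonneg u)
  finally show ?thesis .
qed

lemma tp_left: "TP u (Suc t) x y = (\<Sum>z\<in>UNIV. T u x z * TP u t z y)"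
proof (induction t arbitrary: y)
  case 0 show ?case by (simp add: sum_ind_r sum_ind_l)
next
  case (Suc t)
  have "TP u (Suc (Suc t)) x y = (\<Sum>z\<in>UNIV. (\<Sum>w\<in>UNIV. T u x w * TP u t w z) * T u z y)"
    by (simp only: trans_pow.simps(2)[of p \<nu> u "Suc t"] Suc.IH)
  also have "\<dots> = (\<Sum>w\<in>UNIV. T u x w * (\<Sum>z\<in>UNIV. TP u t w z * T u z y))"
    unfolding sum_distrib_right sum_distrib_left by (subst sum.swap) (simp add: mult.assoc)
  also have "\<dots> = (\<Sum>w\<in>UNIV. T u x w * TP u (Suc t) w y)" by simp
  finally show ?case .
qed

lemma tp_add: "TP u (s + t) x y = (\<Sum>z\<in>UNIV. TP u s x z * TP u t z y)"
proof (induction t arbitrary: y)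
  case 0 show ?case by (simp add: sum_ind_r)
next
  case (Suc t)
  have "TP u (s + Suc t) x y = (\<Sum>w\<in>UNIV. (\<Sum>z\<in>UNIV. TP u s x z * TP u t z w) * T u w y)"
    by (simp only: add_Suc_right trans_pow.simps Suc.IH)
  also have "\<dots> = (\<Sum>z\<in>UNIV. TP u s x z * (\<Sum>w\<in>UNIV. TP u t z w * T u w y))"
    unfolding sum_distrib_right sum_distrib_left by (subst sum.swap) (simp add: mult.assoc)
  also have "\<dots> = (\<Sum>z\<in>UNIV. TP u s x z * TP u (Suc t) z y)" by simp
  finally show ?case .
qed

lemma tp_nonneg: "0 \<le> u \<Longrightarrow> u \<le> 1 \<Longrightarrow> 0 \<le> TP u t x y"
  by (induction t arbitrary: y) (auto intro!: sum_nonneg mult_nonneg_nonneg T_nonneg)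

lemma tp_rowsum: "(\<Sum>y\<in>UNIV. TP u t x y) = 1"
proof (induction t)
  case 0 show ?case by simp
next
  case (Suc t)
  have "(\<Sum>y\<in>UNIV. TP u (Suc t) x y) = (\<Sum>z\<in>UNIV. TP u t x z * (\<Sum>y\<in>UNIV. T u z y))"
    unfolding trans_pow.simps sum_distrib_left by (rule sum.swap)
  thus ?case using Suc by (simp add: T_rowsum)
qed

lemma tp_le1: "0 \<le> u \<Longrightarrow> u \<le> 1 \<Longrightarrow> TP u t x y \<le> 1"
proof -
  assume u: "0 \<le> u" "u \<le> 1"
  have "TP u t x y \<le> (\<Sum>y\<in>UNIV. TP u t x y)"
    by (rule member_le_sum) (auto intro: tp_nonneg u)
  thus ?thesis by (simp add: tp_rowsum)
qed

lemma tp_steps: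
  assumes u: "0 \<le> u" "u \<le> 1" and c: "0 \<le> c" and es: "\<forall>e\<in>set es. e \<in> events \<and> (\<forall>x. c \<le> p x e)"
  shows "(c * mnu ^ CARD('g)) ^ length es \<le> TP u (length es) x (steps es x)"
  using es
proof (induction es arbitrary: x)
  case Nil show ?case by simp
next
  case (Cons e es)
  let ?z = "stepf e x"
  have ih: "(c * mnu ^ CARD('g)) ^ length es \<le> TP u (length es) ?z (steps es ?z)" using Cons by auto
  have ee: "e \<in> events" "c \<le> p x e" using Cons.prems by auto
  have t1: "c * mnu ^ CARD('g) \<le> T u x ?z"
  proof -
    have "c * mnu ^ CARD('g) \<le> p x e * mnu ^ CARD('g)"
      by (rule mult_right_mono[OF ee(2)]) (use mnu_pos in simp)
    also have "\<dots> \<le> T u x ?z" by (rule T_lb0[OF ee(1) u])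
    finally show ?thesis .
  qed
  have "T u x ?z * TP u (length es) ?z (steps es ?z) \<le> (\<Sum>z\<in>UNIV. T u x z * TP u (length es) z (steps es ?z))"
    by (rule member_le_sum) (auto intro!: mult_nonneg_nonneg T_nonneg tp_nonneg u)
  also have "\<dots> = TP u (length (e#es)) x (steps (e#es) x)" by (simp only: length_Cons tp_left steps.simps)
  finally have A: "T u x ?z * TP u (length es) ?z (steps es ?z) \<le> TP u (length (e#es)) x (steps (e#es) x)" .
  have "(c * mnu ^ CARD('g)) * (c * mnu ^ CARD('g)) ^ length es \<le> T u x ?z * TP u (length es) ?z (steps es ?z)"
    by (rule mult_mono[OF t1 ih]) (use c mnu_pos in \<open>auto intro!: T_nonneg u\<close>)
  with A show ?case by simp
qed

lemma reach_steps:
  assumes u: "0 \<le> u" "u \<le> 1" and es: "\<forall>e\<in>set es. e \<in> events \<and> (\<forall>x. 0 < p x e)"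
  shows "(x, steps es x) \<in> (posrel (T u))\<^sup>*"
  using es
proof (induction es arbitrary: x)
  case Nil show ?case by simp
next
  case (Cons e es)
  have ee: "e \<in> events" "0 < p x e" using Cons.prems by auto
  have "0 < p x e * mnu ^ CARD('g)" using ee mnu_pos by simp
  also have "\<dots> \<le> T u x (stepf e x)" by (rule T_lb0[OF ee(1) u])
  finally have "(x, stepf e x) \<in> posrel (T u)" by (simp add: posrel_def)
  moreover have "(stepf e x, steps es (stepf e x)) \<in> (posrel (T u))\<^sup>*" using Cons by auto
  ultimately show ?case by (simp add: converse_rtrancl_into_rtrancl)
qed

lemma T0_prod:
  assumes "e \<in> events"
  shows "(\<Prod>k\<in>UNIV. sfb 0 e x k (k \<in> y)) = (if y = stepf e x then 1 else 0)"
proof (cases "y = stepf e x")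
  case True
  have "sfb 0 e x k (k \<in> y) = 1" for k
    using True events_id[OF assms, of k] by (auto simp: sfb_def stepf_def)
  thus ?thesis using True by simp
next
  case False
  then obtain k where k: "(k \<in> y) \<noteq> (snd e k \<in> x)" by (auto simp: stepf_def)
  have "sfb 0 e x k (k \<in> y) = 0"
    using k events_id[OF assms, of k] by (auto simp: sfb_def)
  hence "(\<Prod>k\<in>UNIV. sfb 0 e x k (k \<in> y)) = 0" by (intro prod_zero) auto
  thus ?thesis using False by simp
qed

lemma T0_eq: "T 0 x y = (\<Sum>e\<in>events. if y = stepf e x then p x e else 0)"
  unfolding T_def2 by (intro sum.cong) (auto simp: T0_prod)

lemma T0_mono:
  assumes "\<forall>e\<in>events. stepf e x = x"
  shows "T 0 x y = (if y = x then 1 else 0)"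
proof -
  have "T 0 x y = (\<Sum>e\<in>events. if y = x then p x e else 0)"
    unfolding T0_eq using assms by (intro sum.cong) auto
  thus ?thesis by (simp add: p_sum)
qed

lemma stepf_empty: "stepf e {} = {}" and stepf_UNIV: "stepf e UNIV = UNIV"
  by (auto simp: stepf_def)

lemma T0_a: "T 0 {} y = (if y = {} then 1 else 0)"
  by (rule T0_mono) (simp add: stepf_empty)
lemma T0_A: "T 0 UNIV y = (if y = UNIV then 1 else 0)"
  by (rule T0_mono) (simp add: stepf_UNIV)

lemma tp0_a: "TP 0 t {} y = (if y = {} then 1 else 0)"
  by (induction t arbitrary: y) (simp_all add: sum_ind_l2 T0_a)
lemma tp0_A: "TP 0 t UNIV y = (if y = UNIV then 1 else 0)"
  by (induction t arbitrary: y) (simp_all add: sum_ind_l2 T0_A)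

end

locale model2 = model p \<nu> for p :: "('g::finite) set \<Rightarrow> 'g event \<Rightarrow> real" and \<nu> +
  fixes g0 :: 'g and es :: "'g event list"
  assumes es_ev: "\<forall>e\<in>set es. e \<in> events \<and> (\<forall>x. 0 < p x e)"
    and g0_in: "\<exists>e\<in>set es. g0 \<in> fst e"
    and es_comp: "\<forall>h. foldr (\<circ>) (map snd es) id h = g0"
begin

lemma steps_es: "steps es x = (if g0 \<in> x then UNIV else {})"
  by (auto simp: steps_eq es_comp)

definition c0 :: real where "c0 = Min ((\<lambda>(x,e). p x e) ` (UNIV \<times> set es))"

lemma es_ne: "es \<noteq> []" using g0_in by auto

lemma c0_pos: "0 < c0"
proof -
  have "finite ((\<lambda>(x,e). p x e) ` (UNIV \<times> set es))" by simp
  moreover have "(\<lambda>(x,e). p x e) ` (UNIV \<times> set es) \<noteq> {}" using es_ne by auto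
  ultimately show ?thesis unfolding c0_def using es_ev by (subst Min_gr_iff) auto
qed

lemma c0_le: "e \<in> set es \<Longrightarrow> c0 \<le> p x e"
  unfolding c0_def by (rule Min_le) auto

definition cfix :: real where "cfix = (c0 * mnu ^ CARD('g)) ^ length es"

lemma cfix_pos: "0 < cfix" using c0_pos mnu_pos by (simp add: cfix_def)

lemma absorb:
  assumes "0 \<le> u" "u \<le> 1"
  shows "cfix \<le> TP u (length es) x (if g0 \<in> x then UNIV else {})"
  using tp_steps[OF assms, of c0 es x] c0_pos es_ev c0_le
  by (simp add: cfix_def steps_es less_imp_le)

lemma covered: "\<exists>e\<in>set es. h \<in> fst e"
proof (rule ccontr)
  assume nh: "\<not> (\<exists>e\<in>set es. h \<in> fst e)"
  hence "foldr (\<circ>) (map snd es) id h = h" using es_ev by (intro foldr_fix) auto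
  hence "h = g0" using es_comp by simp
  thus False using g0_in nh by auto
qed

lemma d_pos: "0 < d_rate p h x"
proof -
  obtain e where e: "e \<in> set es" "h \<in> fst e" using covered by blast
  have ev: "e \<in> events" "0 < p x e" using e es_ev by auto
  have "p x e * (if h \<in> fst e then 1 else 0) \<le> (\<Sum>e\<in>events. p x e * (if h \<in> fst e then 1 else 0))"
    by (rule member_le_sum[OF ev(1)]) (auto intro: p_nonneg finite_events)
  thus ?thesis using ev e by (simp add: d_rate_alt)
qed

lemma reach_UNIV:
  assumes u: "0 < u" "u \<le> 1"
  shows "(x, UNIV) \<in> (posrel (T u))\<^sup>*"
proof -
  have u': "0 \<le> u" "u \<le> 1" using u by auto
  have r1: "(x, steps es x) \<in> (posrel (T u))\<^sup>*" by (rule reach_steps[OF u' es_ev])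
  show ?thesis
  proof (cases "g0 \<in> x")
    case True thus ?thesis using r1 by (simp add: steps_es)
  next
    case False
    obtain e where e: "e \<in> set es" "g0 \<in> fst e" using g0_in by blast
    have ev: "e \<in> events" "0 < p {} e" using e es_ev by auto
    have "0 < p {} e * (mnu ^ CARD('g) * u)" using ev u mnu_pos by simp
    also have "\<dots> \<le> T u {} {g0}"
      by (rule T_lb1[OF ev(1) u' e(2)]) (auto simp: stepf_def)
    finally have "({}, {g0}) \<in> posrel (T u)" by (simp add: posrel_def)
    moreover have "({g0}, UNIV) \<in> (posrel (T u))\<^sup>*"
      using reach_steps[OF u' es_ev, of "{g0}"] by (simp add: steps_es)
    ultimately have "({}, UNIV) \<in> (posrel (T u))\<^sup>*" by (simp add: converse_rtrancl_into_rtrancl)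
    thus ?thesis using r1 False by (simp add: steps_es)
  qed
qed

lemma stationary_iff: "stationary p \<nu> u \<pi> \<longleftrightarrow> (\<forall>x. 0 \<le> \<pi> x) \<and> (\<Sum>x\<in>UNIV. \<pi> x) = 1 \<and> invar (T u) \<pi>"
  by (simp add: stationary_def invar_def)

lemma stat_unique:
  assumes "0 < u" "u \<le> 1"
  shows "\<exists>!\<pi>. stationary p \<nu> u \<pi>"
  unfolding stationary_iff
  by (rule stoch_stationary_unique[OF T_stoch]) (use assms reach_UNIV in auto)

lemma piu_stat:
  assumes "0 < u" "u \<le> 1"
  shows "(\<forall>x. 0 \<le> pi_MSS0 p \<nu> u x) \<and> (\<Sum>x\<in>UNIV. pi_MSS0 p \<nu> u x) = 1 \<and> invar (T u) (pi_MSS0 p \<nu> u)"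
  unfolding pi_MSS0_def stationary_iff[symmetric] by (rule theI'[OF stat_unique[OF assms]])

lemma invar_mult_piu:
  assumes "0 < u" "u \<le> 1" "invar (T u) \<mu>"
  shows "\<mu> = (\<lambda>x. (\<Sum>y\<in>UNIV. \<mu> y) * pi_MSS0 p \<nu> u x)"
  by (rule invar_multiple[OF T_stoch _ piu_stat[OF assms(1,2)] assms(3)]) (use assms(1,2) reach_UNIV in auto)

end

context model begin

definition sfp :: "'g event \<Rightarrow> 'g set \<Rightarrow> 'g set \<Rightarrow> 'g \<Rightarrow> real poly" where
  "sfp e x y g = (if g \<in> fst e
     then [: (if (snd e g \<in> x) = (g\<in>y) then 1 else 0),
             (if g \<in> y then \<nu> else 1-\<nu>) - (if (snd e g \<in> x) = (g\<in>y) then 1 else 0) :]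
     else [: (if (g\<in>x) = (g\<in>y) then 1 else 0) :])"

lemma poly_sfp: "poly (sfp e x y g) u = sfb u e x g (g\<in>y)"
  by (simp add: sfp_def sfb_def algebra_simps)

definition Tp :: "'g set \<Rightarrow> 'g set \<Rightarrow> real poly" where
  "Tp x y = (\<Sum>e\<in>events. [:p x e:] * (\<Prod>g\<in>UNIV. sfp e x y g))"

lemma poly_Tp: "poly (Tp x y) u = T u x y"
  by (simp add: Tp_def T_def2 poly_sum poly_prod poly_sfp)

definition Mp :: "real poly^('g set)^('g set)" where
  "Mp = (\<chi> y x. if y = UNIV then 1 else Tp x y - (if x = y then 1 else 0))"

definition Mu :: "real \<Rightarrow> real^('g set)^('g set)" where
  "Mu u = (\<chi> y x. if y = UNIV then 1 else T u x y - (if x = y then 1 else 0))"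

lemma Mu_poly: "Mu u = (\<chi> i j. poly (Mp$i$j) u)"
  by (simp add: vec_eq_iff Mu_def Mp_def poly_Tp)

definition ev :: "real^('g set)" where "ev = (\<chi> y. if y = UNIV then 1 else 0)"

definition Np :: "'g set \<Rightarrow> real poly" where
  "Np x = det (\<chi> i j. if j = x then [:ev$i:] else Mp$i$j)"

definition Dp :: "real poly" where "Dp = det Mp"

lemma poly_Dp: "poly Dp u = det (Mu u)"
  by (simp add: Dp_def Mu_poly det_poly_eval)

lemma poly_Np: "poly (Np x) u = det (\<chi> i j. if j = x then ev$i else Mu u$i$j)"
proof -
  have "(\<chi> i j. if j = x then ev$i else Mu u$i$j) = (\<chi> i j. poly ((\<chi> i j. if j = x then [:ev$i:] else Mp$i$j)$i$j) u)"
    by (simp add: vec_eq_iff Mu_poly)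
  thus ?thesis unfolding Np_def det_poly_eval[symmetric] by simp
qed

end

context model2 begin

lemma Mu_mult:
  "(Mu u *v v) $ y = (if y = UNIV then (\<Sum>x\<in>UNIV. v$x) else (\<Sum>x\<in>UNIV. v$x * T u x y) - v$y)"
proof (cases "y = UNIV")
  case True thus ?thesis by (simp add: Mu_def matrix_vector_mult_def)
next
  case False
  have "(\<Sum>x\<in>UNIV. (T u x y - (if x = y then 1 else 0)) * v$x) = (\<Sum>x\<in>UNIV. v$x * T u x y) - (\<Sum>x\<in>UNIV. (if x = y then 1 else 0) * v$x)"
    by (simp add: algebra_simps sum_subtractf)
  also have "(\<Sum>x\<in>UNIV. (if x = y then 1 else 0) * v$x) = v$y" by (rule sum_ind_l2)
  finally show ?thesis using False by (simp add: Mu_def matrix_vector_mult_def)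
qed

lemma Mu_sol:
  assumes "0 < u" "u \<le> 1"
  shows "Mu u *v (\<chi> x. pi_MSS0 p \<nu> u x) = ev"
  using piu_stat[OF assms] by (simp add: vec_eq_iff Mu_mult ev_def invar_def)

lemma Mu_ker:
  assumes u: "0 < u" "u \<le> 1" and v: "Mu u *v v = 0"
  shows "v = 0"
proof -
  define \<mu> where "\<mu> x = v$x" for x
  have e1: "(\<Sum>x\<in>UNIV. \<mu> x) = 0" using v[THEN arg_cong[where f="\<lambda>w. w$UNIV"]]
    by (simp add: Mu_mult \<mu>_def)
  have e2: "(\<Sum>x\<in>UNIV. \<mu> x * T u x y) = \<mu> y" if "y \<noteq> UNIV" for y
    using v[THEN arg_cong[where f="\<lambda>w. w$y"]] that by (simp add: Mu_mult \<mu>_def)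
  define f where "f y = (\<Sum>x\<in>UNIV. \<mu> x * T u x y) - \<mu> y" for y
  have "(\<Sum>y\<in>UNIV. f y) = (\<Sum>x\<in>UNIV. \<mu> x * (\<Sum>y\<in>UNIV. T u x y)) - (\<Sum>y\<in>UNIV. \<mu> y)"
    unfolding f_def sum_subtractf sum_distrib_left by (subst sum.swap) simp
  also have "\<dots> = 0" by (simp add: T_rowsum e1)
  finally have s0: "(\<Sum>y\<in>UNIV. f y) = 0" .
  have "(\<Sum>y\<in>UNIV. f y) = f UNIV + (\<Sum>y\<in>UNIV - {UNIV}. f y)"
    by (rule sum.remove) auto
  also have "(\<Sum>y\<in>UNIV - {UNIV}. f y) = 0" by (intro sum.neutral) (auto simp: f_def e2)
  finally have "f UNIV = 0" using s0 by simp
  hence "invar (T u) \<mu>" using e2 unfolding invar_def f_def by (metis eq_iff_diff_eq_0)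
  hence "\<mu> = (\<lambda>x. 0 * pi_MSS0 p \<nu> u x)" using invar_mult_piu[OF u] e1 by metis
  thus ?thesis by (simp add: vec_eq_iff \<mu>_def fun_eq_iff)
qed

lemma Mu_det: "0 < u \<Longrightarrow> u \<le> 1 \<Longrightarrow> det (Mu u) \<noteq> 0"
  using Mu_ker by (metis invertible_det_nz invertible_left_inverse matrix_left_invertible_ker)

lemma piu_rat:
  assumes "0 < u" "u \<le> 1"
  shows "pi_MSS0 p \<nu> u x = poly (Np x) u / poly Dp u" and "poly Dp u \<noteq> 0"
proof -
  have "(\<chi> x. pi_MSS0 p \<nu> u x) = (\<chi> k. det(\<chi> i j. if j=k then ev$i else Mu u$i$j) / det (Mu u))"
    using cramer[OF Mu_det[OF assms]] Mu_sol[OF assms] by blast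
  hence "pi_MSS0 p \<nu> u x = det(\<chi> i j. if j=x then ev$i else Mu u$i$j) / det (Mu u)"
    using arg_cong[where f="\<lambda>w. w $ x"] by simp
  thus "pi_MSS0 p \<nu> u x = poly (Np x) u / poly Dp u" by (simp add: poly_Np poly_Dp)
  show "poly Dp u \<noteq> 0" using Mu_det[OF assms] by (simp add: poly_Dp)
qed

lemma piu_le1: "0 < u \<Longrightarrow> u \<le> 1 \<Longrightarrow> pi_MSS0 p \<nu> u x \<le> 1"
proof -
  assume u: "0 < u" "u \<le> 1"
  have "pi_MSS0 p \<nu> u x \<le> (\<Sum>y\<in>UNIV. pi_MSS0 p \<nu> u y)"
    by (rule member_le_sum) (use piu_stat[OF u] in auto)
  thus ?thesis using piu_stat[OF u] by simp
qed

lemma piu_nonneg: "0 < u \<Longrightarrow> u \<le> 1 \<Longrightarrow> 0 \<le> pi_MSS0 p \<nu> u x"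
  using piu_stat by blast

lemma ev_at_right01: "eventually (\<lambda>u. 0 < u \<and> u < 1) (at_right (0::real))"
  unfolding eventually_at_right_field by (auto intro!: exI[of _ 1])

lemma lim_piu: "\<exists>L. ((\<lambda>u. pi_MSS0 p \<nu> u x) \<longlongrightarrow> L) (at_right 0)"
proof -
  have "\<exists>L. ((\<lambda>u. poly (Np x) u / poly Dp u) \<longlongrightarrow> L) (at_right 0)"
  proof (rule poly_ratio_limit[of Dp "Np x" 1])
    fix u :: real assume u: "0 < u" "u \<le> 1"
    show "poly Dp u \<noteq> 0" by (rule piu_rat(2)[OF u])
    show "\<bar>poly (Np x) u / poly Dp u\<bar> \<le> 1"
      using piu_rat(1)[OF u, of x] piu_le1[OF u, of x] piu_nonneg[OF u, of x] by simp
  qed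
  then obtain L where L: "((\<lambda>u. poly (Np x) u / poly Dp u) \<longlongrightarrow> L) (at_right 0)" by blast
  have "eventually (\<lambda>u. poly (Np x) u / poly Dp u = pi_MSS0 p \<nu> u x) (at_right 0)"
    using ev_at_right01 by eventually_elim (simp add: piu_rat)
  hence "((\<lambda>u. pi_MSS0 p \<nu> u x) \<longlongrightarrow> L) (at_right 0)" by (rule Lim_transform_eventually[OF L])
  thus ?thesis by blast
qed

lemma lim_ratio:
  assumes pos: "\<And>u. 0 < u \<Longrightarrow> u \<le> 1 \<Longrightarrow> 0 < (\<Sum>y\<in>S. pi_MSS0 p \<nu> u y)" and x: "x \<in> S"
  shows "\<exists>L. ((\<lambda>u. pi_MSS0 p \<nu> u x / (\<Sum>y\<in>S. pi_MSS0 p \<nu> u y)) \<longlongrightarrow> L) (at_right 0)"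
proof -
  define Q where "Q = (\<Sum>y\<in>S. Np y)"
  have eq: "pi_MSS0 p \<nu> u x / (\<Sum>y\<in>S. pi_MSS0 p \<nu> u y) = poly (Np x) u / poly Q u"
    and Qnz: "poly Q u \<noteq> 0" if u: "0 < u" "u \<le> 1" for u
  proof -
    have d: "poly Dp u \<noteq> 0" by (rule piu_rat(2)[OF u])
    have "(\<Sum>y\<in>S. pi_MSS0 p \<nu> u y) = poly Q u / poly Dp u"
      by (simp add: Q_def poly_sum piu_rat[OF u] sum_divide_distrib)
    moreover have "0 < (\<Sum>y\<in>S. pi_MSS0 p \<nu> u y)" by (rule pos[OF u])
    ultimately show "poly Q u \<noteq> 0" by auto
    show "pi_MSS0 p \<nu> u x / (\<Sum>y\<in>S. pi_MSS0 p \<nu> u y) = poly (Np x) u / poly Q u"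
      using d \<open>poly Q u \<noteq> 0\<close> \<open>(\<Sum>y\<in>S. pi_MSS0 p \<nu> u y) = poly Q u / poly Dp u\<close>
      by (simp add: piu_rat[OF u])
  qed
  have bnd: "\<bar>poly (Np x) u / poly Q u\<bar> \<le> 1" if u: "0 < u" "u \<le> 1" for u
  proof -
    have "pi_MSS0 p \<nu> u x \<le> (\<Sum>y\<in>S. pi_MSS0 p \<nu> u y)"
      by (rule member_le_sum[OF x]) (use piu_nonneg[OF u] in auto)
    moreover have "0 \<le> pi_MSS0 p \<nu> u x" by (rule piu_nonneg[OF u])
    ultimately have r: "0 \<le> pi_MSS0 p \<nu> u x / (\<Sum>y\<in>S. pi_MSS0 p \<nu> u y) \<and> pi_MSS0 p \<nu> u x / (\<Sum>y\<in>S. pi_MSS0 p \<nu> u y) \<le> 1"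
      using pos[OF u] by simp
    show ?thesis unfolding eq[OF u, symmetric] using r by (metis abs_of_nonneg)
  qed
  obtain L where L: "((\<lambda>u. poly (Np x) u / poly Q u) \<longlongrightarrow> L) (at_right 0)"
    using poly_ratio_limit[of Q "Np x" 1] Qnz bnd by blast
  have "eventually (\<lambda>u. poly (Np x) u / poly Q u = pi_MSS0 p \<nu> u x / (\<Sum>y\<in>S. pi_MSS0 p \<nu> u y)) (at_right 0)"
    using ev_at_right01 by eventually_elim (simp add: eq)
  hence "((\<lambda>u. pi_MSS0 p \<nu> u x / (\<Sum>y\<in>S. pi_MSS0 p \<nu> u y)) \<longlongrightarrow> L) (at_right 0)"
    by (rule Lim_transform_eventually[OF L])
  thus ?thesis by blast
qed

end

lemma prod_diff_le:
  fixes a b :: "'a \<Rightarrow> real"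
  assumes "finite A" "\<forall>i\<in>A. 0 \<le> a i \<and> a i \<le> 1 \<and> 0 \<le> b i \<and> b i \<le> 1"
  shows "\<bar>prod a A - prod b A\<bar> \<le> (\<Sum>i\<in>A. \<bar>a i - b i\<bar>)"
  using assms
proof (induction A rule: finite_induct)
  case empty show ?case by simp
next
  case (insert i F)
  let ?P = "prod a F" and ?Q = "prod b F"
  have ab: "0 \<le> a i" "a i \<le> 1" "0 \<le> b i" "b i \<le> 1" using insert.prems by auto
  have PQ: "0 \<le> ?Q" "?Q \<le> 1" using insert.prems by (auto intro!: prod_nonneg prod_le_1)
  have ih: "\<bar>?P - ?Q\<bar> \<le> (\<Sum>i\<in>F. \<bar>a i - b i\<bar>)" using insert by auto
  have "a i * ?P - b i * ?Q = a i * (?P - ?Q) + (a i - b i) * ?Q" by (simp add: algebra_simps)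
  hence "\<bar>a i * ?P - b i * ?Q\<bar> \<le> \<bar>a i * (?P - ?Q)\<bar> + \<bar>(a i - b i) * ?Q\<bar>" by (metis abs_triangle_ineq)
  also have "\<bar>a i * (?P - ?Q)\<bar> \<le> \<bar>?P - ?Q\<bar>"
    using ab by (simp add: abs_mult mult_left_le_one_le)
  also have "\<bar>(a i - b i) * ?Q\<bar> \<le> \<bar>a i - b i\<bar>"
    using PQ by (simp add: abs_mult mult_left_le)
  finally show ?case using ih insert.hyps by simp
qed

context model begin

lemma sfb_le1: "0 \<le> u \<Longrightarrow> u \<le> 1 \<Longrightarrow> sfb u e x k b \<le> 1"
  using sfb_sum[of u e x k] sfb_nonneg[of u e x k "\<not> b"] by (cases b) auto

lemma sfb_diff: "0 \<le> u \<Longrightarrow> u \<le> 1 \<Longrightarrow> \<bar>sfb u e x k b - sfb 0 e x k b\<bar> \<le> u"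
proof -
  assume u: "0 \<le> u" "u \<le> 1"
  define t where "t = (if b then \<nu> else 1-\<nu>) - (if (snd e k \<in> x) = b then 1 else 0)"
  have t: "\<bar>t\<bar> \<le> 1" using nu0 nu1 by (auto simp: t_def)
  have "sfb u e x k b - sfb 0 e x k b = (if k \<in> fst e then u * t else 0)"
    by (simp add: sfb_def t_def algebra_simps)
  moreover have "\<bar>u * t\<bar> \<le> u" using t u by (simp add: abs_mult mult_left_le)
  ultimately show ?thesis using u by auto
qed

lemma T_lip:
  assumes u: "0 \<le> u" "u \<le> 1"
  shows "\<bar>T u x y - T 0 x y\<bar> \<le> real CARD('g) * u"
proof -
  have "T u x y - T 0 x y = (\<Sum>e\<in>events. p x e * ((\<Prod>k\<in>UNIV. sfb u e x k (k \<in> y)) - (\<Prod>k\<in>UNIV. sfb 0 e x k (k \<in> y))))"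
    unfolding T_def2 by (simp add: sum_subtractf right_diff_distrib)
  also have "\<bar>\<dots>\<bar> \<le> (\<Sum>e\<in>events. \<bar>p x e * ((\<Prod>k\<in>UNIV. sfb u e x k (k \<in> y)) - (\<Prod>k\<in>UNIV. sfb 0 e x k (k \<in> y)))\<bar>)"
    by (rule sum_abs)
  also have "\<dots> \<le> (\<Sum>e\<in>events. p x e * (real CARD('g) * u))"
  proof (rule sum_mono)
    fix e :: "'g event"
    have "\<bar>(\<Prod>k\<in>UNIV. sfb u e x k (k \<in> y)) - (\<Prod>k\<in>UNIV. sfb 0 e x k (k \<in> y))\<bar> \<le> (\<Sum>k\<in>UNIV. \<bar>sfb u e x k (k \<in> y) - sfb 0 e x k (k \<in> y)\<bar>)"
      by (rule prod_diff_le) (use u in \<open>auto intro: sfb_nonneg sfb_le1\<close>)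
    also have "\<dots> \<le> (\<Sum>k\<in>(UNIV::'g set). u)" by (rule sum_mono) (rule sfb_diff[OF u])
    also have "\<dots> = real CARD('g) * u" by simp
    finally have "\<bar>(\<Prod>k\<in>UNIV. sfb u e x k (k \<in> y)) - (\<Prod>k\<in>UNIV. sfb 0 e x k (k \<in> y))\<bar> \<le> real CARD('g) * u" .
    thus "\<bar>p x e * ((\<Prod>k\<in>UNIV. sfb u e x k (k \<in> y)) - (\<Prod>k\<in>UNIV. sfb 0 e x k (k \<in> y)))\<bar> \<le> p x e * (real CARD('g) * u)"
      using p_nonneg[of x e] by (simp add: abs_mult mult_left_mono)
  qed
  also have "\<dots> = real CARD('g) * u" by (simp add: sum_distrib_right[symmetric] p_sum)
  finally show ?thesis .
qed

lemma p_UNIV: "p UNIV = p {}" using a1 by (auto simp: assumption1_def)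

lemma e_rate_UNIV: "e_rate p h g UNIV = e_rate p h g {}"
  by (simp add: e_rate_def p_UNIV)
lemma d_rate_UNIV: "d_rate p g UNIV = d_rate p g {}"
  by (simp add: d_rate_def e_rate_UNIV)
lemma b_total_UNIV: "b_total p UNIV = b_total p {}"
  by (simp add: b_total_def b_rate_def e_rate_UNIV)

lemma b_total_eq: "b_total p x = (\<Sum>g\<in>UNIV. d_rate p g x)"
  unfolding b_total_def b_rate_def d_rate_def by (rule sum.swap)

definition Trs :: "'g set set" where "Trs = UNIV - {{}, UNIV}"

lemma empty_ne_UNIV: "({}::'g set) \<noteq> UNIV" by auto

lemma sum_split3: "(\<Sum>y\<in>UNIV. f y) = f {} + f UNIV + (\<Sum>y\<in>Trs. f y)"
  for f :: "'g set \<Rightarrow> real"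
proof -
  have U: "(UNIV :: 'g set set) = insert {} (insert UNIV Trs)" by (auto simp: Trs_def)
  show ?thesis unfolding U using empty_ne_UNIV by (simp add: Trs_def)
qed

end

context model2 begin

definition hA :: "'g set \<Rightarrow> real" where "hA x = lim (\<lambda>t. TP 0 t x UNIV)"
definition ha :: "'g set \<Rightarrow> real" where "ha x = lim (\<lambda>t. TP 0 t x {})"

lemma tp0_inc:
  assumes "\<forall>e\<in>events. stepf e z = z"
  shows "incseq (\<lambda>t. TP 0 t x z)"
proof (rule incseq_SucI)
  fix t
  have "TP 0 t x z * T 0 z z \<le> (\<Sum>w\<in>UNIV. TP 0 t x w * T 0 w z)"
    by (rule member_le_sum) (auto intro!: mult_nonneg_nonneg tp_nonneg T_nonneg)
  thus "TP 0 t x z \<le> TP 0 (Suc t) x z" using T0_mono[OF assms] by simp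
qed

lemma tp0_conv:
  assumes "\<forall>e\<in>events. stepf e z = z"
  shows "(\<lambda>t. TP 0 t x z) \<longlonglongrightarrow> lim (\<lambda>t. TP 0 t x z)"
proof -
  have "\<forall>i. TP 0 i x z \<le> 1" using tp_le1[of 0] by auto
  then obtain L where "(\<lambda>t. TP 0 t x z) \<longlonglongrightarrow> L"
    using incseq_convergent[OF tp0_inc[OF assms, of x]] by blast
  thus ?thesis by (simp add: limI)
qed

lemma hA_lim: "(\<lambda>t. TP 0 t x UNIV) \<longlonglongrightarrow> hA x"
  unfolding hA_def by (rule tp0_conv) (simp add: stepf_UNIV)
lemma ha_lim: "(\<lambda>t. TP 0 t x {}) \<longlonglongrightarrow> ha x"
  unfolding ha_def by (rule tp0_conv) (simp add: stepf_empty)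

lemma hA_harm: "hA x = (\<Sum>z\<in>UNIV. T 0 x z * hA z)"
proof -
  have "(\<lambda>t. TP 0 (Suc t) x UNIV) \<longlonglongrightarrow> hA x" using hA_lim by (rule LIMSEQ_Suc)
  moreover have "(\<lambda>t. TP 0 (Suc t) x UNIV) \<longlonglongrightarrow> (\<Sum>z\<in>UNIV. T 0 x z * hA z)"
    unfolding tp_left by (intro tendsto_intros hA_lim)
  ultimately show ?thesis by (rule LIMSEQ_unique)
qed

lemma hA_nonneg: "0 \<le> hA x"
  by (rule LIMSEQ_le_const[OF hA_lim]) (use tp_nonneg[of 0] in auto)
lemma hA_le1: "hA x \<le> 1"
  by (rule LIMSEQ_le_const2[OF hA_lim]) (use tp_le1[of 0] in auto)
lemma ha_nonneg: "0 \<le> ha x"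
  by (rule LIMSEQ_le_const[OF ha_lim]) (use tp_nonneg[of 0] in auto)

lemma hA_UNIV: "hA UNIV = 1"
  using hA_lim[of UNIV] by (simp add: tp0_A LIMSEQ_const_iff)
lemma hA_empty: "hA {} = 0"
  using hA_lim[of "{}"] empty_ne_UNIV by (simp add: tp0_a LIMSEQ_const_iff)

lemma tp0_Trs_empty: "(\<Sum>y\<in>Trs. TP 0 k {} y) = 0"
  by (rule sum.neutral) (auto simp: tp0_a Trs_def)
lemma tp0_Trs_UNIV: "(\<Sum>y\<in>Trs. TP 0 k UNIV y) = 0"
  by (rule sum.neutral) (auto simp: tp0_A Trs_def)

lemma r_contract:
  assumes c: "\<forall>z\<in>Trs. (\<Sum>y\<in>Trs. TP 0 k z y) \<le> c" "0 \<le> c"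
  shows "(\<Sum>y\<in>Trs. TP 0 (t+k) x y) \<le> c * (\<Sum>y\<in>Trs. TP 0 t x y)"
proof -
  have "(\<Sum>y\<in>Trs. TP 0 (t+k) x y) = (\<Sum>z\<in>UNIV. TP 0 t x z * (\<Sum>y\<in>Trs. TP 0 k z y))"
    unfolding tp_add sum_distrib_left by (rule sum.swap)
  also have "\<dots> = (\<Sum>z\<in>Trs. TP 0 t x z * (\<Sum>y\<in>Trs. TP 0 k z y))"
    by (simp add: sum_split3[of "\<lambda>z. TP 0 t x z * (\<Sum>y\<in>Trs. TP 0 k z y)"] tp0_Trs_empty tp0_Trs_UNIV)
  also have "\<dots> \<le> (\<Sum>z\<in>Trs. TP 0 t x z * c)"
    by (rule sum_mono) (use c in \<open>auto intro!: mult_left_mono tp_nonneg\<close>)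
  also have "\<dots> = c * (\<Sum>y\<in>Trs. TP 0 t x y)" by (simp add: sum_distrib_left mult.commute)
  finally show ?thesis .
qed

lemma r_m: "z \<in> Trs \<Longrightarrow> (\<Sum>y\<in>Trs. TP 0 (length es) z y) \<le> 1 - cfix"
proof -
  assume z: "z \<in> Trs"
  have "1 = TP 0 (length es) z {} + TP 0 (length es) z UNIV + (\<Sum>y\<in>Trs. TP 0 (length es) z y)"
    using tp_rowsum[of 0 "length es" z] by (simp add: sum_split3)
  moreover have "cfix \<le> TP 0 (length es) z {} + TP 0 (length es) z UNIV"
    using absorb[of 0 z] tp_nonneg[of 0 "length es" z "{}"] tp_nonneg[of 0 "length es" z UNIV]
    by (cases "g0 \<in> z") auto
  ultimately show ?thesis by linarith
qed

lemma r_1: "(\<Sum>y\<in>Trs. TP 0 1 z y) \<le> 1"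
proof -
  have "(\<Sum>y\<in>Trs. TP 0 1 z y) \<le> (\<Sum>y\<in>UNIV. TP 0 1 z y)"
    by (rule sum_mono2) (use tp_nonneg[of 0 1 z] in auto)
  thus ?thesis by (simp only: tp_rowsum)
qed

lemma r_nonneg: "0 \<le> (\<Sum>y\<in>Trs. TP 0 t x y)"
  by (rule sum_nonneg) (auto intro: tp_nonneg)

lemma cfix_le1: "cfix \<le> 1"
proof -
  have "cfix \<le> TP 0 (length es) {} {}" using absorb[of 0 "{}"] by simp
  also have "\<dots> \<le> 1" by (rule tp_le1) auto
  finally show ?thesis .
qed

lemma r_tendsto: "(\<lambda>t. \<Sum>y\<in>Trs. TP 0 t x y) \<longlonglongrightarrow> 0"
proof -
  define r where "r t = (\<Sum>y\<in>Trs. TP 0 t x y)" for t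
  have dec: "decseq r"
  proof (rule decseq_SucI)
    fix t
    have "r (t + 1) \<le> 1 * r t" unfolding r_def by (rule r_contract) (use r_1 in auto)
    thus "r (Suc t) \<le> r t" by simp
  qed
  have r0: "\<And>t. 0 \<le> r t" unfolding r_def by (rule r_nonneg)
  obtain L where L: "r \<longlonglongrightarrow> L" "\<forall>i. L \<le> r i"
    using decseq_convergent[OF dec, of 0] r0 by blast
  have pw: "r (k * length es) \<le> (1 - cfix) ^ k" for k
  proof (induction k)
    case 0
    have "r 0 \<le> 1" unfolding r_def using r_1[of x] 
    proof -
      have "(\<Sum>y\<in>Trs. TP 0 0 x y) \<le> (\<Sum>y\<in>UNIV. TP 0 0 x y)" by (rule sum_mono2) (auto intro: tp_nonneg)
      thus "(\<Sum>y\<in>Trs. TP 0 0 x y) \<le> 1" by (simp only: tp_rowsum)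
    qed
    thus ?case by simp
  next
    case (Suc k)
    have "r (k * length es + length es) \<le> (1 - cfix) * r (k * length es)"
      unfolding r_def by (rule r_contract) (use r_m cfix_le1 in auto)
    also have "\<dots> \<le> (1 - cfix) * (1 - cfix) ^ k"
      by (rule mult_left_mono[OF Suc.IH]) (use cfix_le1 in auto)
    finally show ?case by (simp add: add.commute)
  qed
  have "L \<le> (1 - cfix) ^ k" for k using L(2) pw order_trans by blast
  moreover have "(\<lambda>k. (1 - cfix) ^ k) \<longlonglongrightarrow> 0"
    by (rule LIMSEQ_power_zero) (use cfix_pos cfix_le1 in auto)
  ultimately have "L \<le> 0" by (intro LIMSEQ_le_const) auto
  moreover have "0 \<le> L" using L(1) r0 by (intro LIMSEQ_le_const) auto
  ultimately have "L = 0" by simp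
  moreover have "r = (\<lambda>t. \<Sum>y\<in>Trs. TP 0 t x y)" by (simp add: fun_eq_iff r_def)
  ultimately show ?thesis using L(1) by simp
qed

lemma hA_ha: "hA x + ha x = 1"
proof -
  have eq: "TP 0 t x UNIV + TP 0 t x {} = 1 - (\<Sum>y\<in>Trs. TP 0 t x y)" for t
    using tp_rowsum[of 0 t x] by (simp add: sum_split3)
  have "(\<lambda>t. TP 0 t x UNIV + TP 0 t x {}) \<longlonglongrightarrow> hA x + ha x" by (intro tendsto_intros hA_lim ha_lim)
  moreover have "(\<lambda>t. TP 0 t x UNIV + TP 0 t x {}) \<longlonglongrightarrow> 1 - 0"
    unfolding eq by (intro tendsto_intros r_tendsto)
  ultimately show ?thesis using LIMSEQ_unique by fastforce
qed

lemma hA_g0: "cfix \<le> hA {g0}"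
proof -
  have "cfix \<le> TP 0 (length es) {g0} UNIV" using absorb[of 0 "{g0}"] by simp
  also have "\<dots> \<le> hA {g0}"
    by (rule incseq_le[OF tp0_inc hA_lim]) (simp add: stepf_UNIV)
  finally show ?thesis .
qed

lemma ha_g0: "cfix \<le> ha (UNIV - {g0})"
proof -
  have "cfix \<le> TP 0 (length es) (UNIV - {g0}) {}" using absorb[of 0 "UNIV - {g0}"] by simp
  also have "\<dots> \<le> ha (UNIV - {g0})"
    by (rule incseq_le[OF tp0_inc ha_lim]) (simp add: stepf_empty)
  finally show ?thesis .
qed

lemma d_nonneg: "0 \<le> d_rate p g x" using d_pos less_imp_le by blast

definition bo :: real where "bo = b_total p {}"

lemma bo_eq: "bo = (\<Sum>g\<in>UNIV. d_rate p g {})" by (simp add: bo_def b_total_eq)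
lemma bo_pos: "0 < bo" unfolding bo_eq by (rule sum_pos) (auto intro: d_pos)

lemma rhoA_eq: "rho_A p \<nu> = (\<Sum>g\<in>UNIV. d_rate p g {} * hA {g}) / bo"
  unfolding rho_A_def hA_def bo_def by (simp add: sum_divide_distrib)

lemma rhoa_eq: "rho_a p \<nu> = (\<Sum>g\<in>UNIV. d_rate p g {} * ha (UNIV - {g})) / bo"
  unfolding rho_a_def ha_def bo_def by (simp add: sum_divide_distrib d_rate_UNIV b_total_UNIV)

lemma rhoA_pos: "0 < rho_A p \<nu>"
proof -
  have "d_rate p g0 {} * hA {g0} \<le> (\<Sum>g\<in>UNIV. d_rate p g {} * hA {g})"
    by (rule member_le_sum) (auto intro!: mult_nonneg_nonneg hA_nonneg d_nonneg)
  moreover have "0 < d_rate p g0 {} * hA {g0}" using d_pos hA_g0 cfix_pos by simp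
  ultimately show ?thesis unfolding rhoA_eq using bo_pos by simp
qed

lemma rhoa_pos: "0 < rho_a p \<nu>"
proof -
  have "d_rate p g0 {} * ha (UNIV - {g0}) \<le> (\<Sum>g\<in>UNIV. d_rate p g {} * ha (UNIV - {g}))"
    by (rule member_le_sum) (auto intro!: mult_nonneg_nonneg ha_nonneg d_nonneg)
  moreover have "0 < d_rate p g0 {} * ha (UNIV - {g0})" using d_pos ha_g0 cfix_pos by simp
  ultimately show ?thesis unfolding rhoa_eq using bo_pos by simp
qed

end

definition flip :: "'g \<Rightarrow> 'g set \<Rightarrow> 'g set" where
  "flip g x = (if g \<in> x then x - {g} else insert g x)"

lemma flip_mem: "(k \<in> flip g x) = (if k = g then k \<notin> x else k \<in> x)"
  by (auto simp: flip_def)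

lemma flip_ne: "flip g x \<noteq> x" by (auto simp: flip_def)

lemma flip_inj: "flip g x = flip g' x \<Longrightarrow> g = g'"
  by (metis flip_mem)

context model begin

definition kap :: "'g set \<Rightarrow> 'g \<Rightarrow> real" where "kap x0 g = (if g \<in> x0 then 1 - \<nu> else \<nu>)"

lemma sfb0: "e \<in> events \<Longrightarrow> sfb 0 e x k b = (if (snd e k \<in> x) = b then 1 else 0)"
  by (auto simp: sfb_def events_id)

lemma sfb_poly_tendsto:
  "((\<lambda>u. sfb u e x k b) \<longlongrightarrow> sfb 0 e x k b) (at_right 0)"
proof -
  define y where "y = (if b then {k} else {})"
  have b: "b = (k \<in> y)" by (simp add: y_def)
  show ?thesis unfolding b poly_sfp[symmetric] by (intro tendsto_intros)
qed

lemma prod_lim_e: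
  assumes e: "e \<in> events" and fx: "stepf e x0 = x0" and y: "y \<noteq> x0"
  shows "((\<lambda>u. (\<Prod>k\<in>UNIV. sfb u e x0 k (k\<in>y)) / u) \<longlongrightarrow>
           (\<Sum>g\<in>UNIV. if y = flip g x0 \<and> g \<in> fst e then kap x0 g else 0)) (at_right 0)"
proof -
  have m: "(snd e k \<in> x0) = (k \<in> x0)" for k using fx by (auto simp: stepf_def)
  obtain gg where gg: "(gg \<in> y) \<noteq> (gg \<in> x0)" using y by blast
  define K where "K = (if gg \<in> fst e then kap x0 gg else 0)"
  have sK: "sfb u e x0 gg (gg\<in>y) / u = K" if "u \<noteq> 0" for u
  proof (cases "gg \<in> fst e")
    case True
    have "sfb u e x0 gg (gg\<in>y) = u * kap x0 gg" using True gg m[of gg] by (auto simp: sfb_def kap_def)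
    thus ?thesis using that True by (simp add: K_def)
  next
    case False
    have "sfb u e x0 gg (gg\<in>y) = 0" using False gg by (auto simp: sfb_def)
    thus ?thesis using False by (simp add: K_def)
  qed
  have split: "(\<Prod>k\<in>UNIV. sfb u e x0 k (k\<in>y)) = sfb u e x0 gg (gg\<in>y) * (\<Prod>k\<in>UNIV - {gg}. sfb u e x0 k (k\<in>y))" for u
    by (rule prod.remove) auto
  have ev: "eventually (\<lambda>u. (\<Prod>k\<in>UNIV. sfb u e x0 k (k\<in>y)) / u = K * (\<Prod>k\<in>UNIV - {gg}. sfb u e x0 k (k\<in>y))) (at_right 0)"
    using eventually_at_right_less[of "0::real"]
  proof eventually_elim
    case (elim u)
    thus ?case unfolding split using sK[of u] by (simp add: field_simps)
  qed
  have lim1: "((\<lambda>u. K * (\<Prod>k\<in>UNIV - {gg}. sfb u e x0 k (k\<in>y))) \<longlongrightarrow> K * (\<Prod>k\<in>UNIV - {gg}. sfb 0 e x0 k (k\<in>y))) (at_right 0)"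
    by (intro tendsto_intros sfb_poly_tendsto)
  have p0: "(\<Prod>k\<in>UNIV - {gg}. sfb 0 e x0 k (k\<in>y)) = (if y = flip gg x0 then 1 else 0)"
  proof (cases "y = flip gg x0")
    case True
    have "sfb 0 e x0 k (k\<in>y) = 1" if "k \<in> UNIV - {gg}" for k
      using that True by (auto simp: sfb0[OF e] m flip_mem)
    thus ?thesis using True by simp
  next
    case False
    have "\<exists>k. k \<noteq> gg \<and> (k \<in> y) \<noteq> (k \<in> x0)"
    proof (rule ccontr)
      assume "\<not> ?thesis"
      hence "\<forall>k. k \<noteq> gg \<longrightarrow> (k\<in>y) = (k\<in>x0)" by blast
      hence "y = flip gg x0" using gg by (auto simp: set_eq_iff flip_mem)
      with False show False ..
    qed
    then obtain k where k: "k \<noteq> gg" "(k \<in> y) \<noteq> (k \<in> x0)" by blast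
    have "sfb 0 e x0 k (k\<in>y) = 0" using k by (simp add: sfb0[OF e] m)
    hence "(\<Prod>k\<in>UNIV - {gg}. sfb 0 e x0 k (k\<in>y)) = 0" using k(1) by (intro prod_zero) auto
    thus ?thesis using False by simp
  qed
  have target: "K * (if y = flip gg x0 then 1 else 0) = (\<Sum>g\<in>UNIV. if y = flip g x0 \<and> g \<in> fst e then kap x0 g else 0)"
  proof (cases "y = flip gg x0")
    case True
    have "(\<Sum>g\<in>UNIV. if y = flip g x0 \<and> g \<in> fst e then kap x0 g else 0) = (\<Sum>g\<in>UNIV. if g = gg then K else 0)"
      by (rule sum.cong) (use True in \<open>auto simp: K_def dest: flip_inj\<close>)
    thus ?thesis using True by simp
  next
    case False
    have "y \<noteq> flip g x0" for g
    proof
      assume "y = flip g x0"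
      hence "g = gg" using gg by (auto simp: flip_mem split: if_splits)
      thus False using False \<open>y = flip g x0\<close> by simp
    qed
    thus ?thesis using False by simp
  qed
  have lim2: "((\<lambda>u. K * (\<Prod>k\<in>UNIV - {gg}. sfb u e x0 k (k\<in>y))) \<longlongrightarrow>
           (\<Sum>g\<in>UNIV. if y = flip g x0 \<and> g \<in> fst e then kap x0 g else 0)) (at_right 0)"
    using lim1 unfolding p0 target .
  have ev': "eventually (\<lambda>u. K * (\<Prod>k\<in>UNIV - {gg}. sfb u e x0 k (k\<in>y)) = (\<Prod>k\<in>UNIV. sfb u e x0 k (k\<in>y)) / u) (at_right 0)"
    using ev by (simp add: eq_commute)
  show ?thesis by (rule Lim_transform_eventually[OF lim2 ev'])
qed

lemma sum_fst_swap: "(\<Sum>e\<in>events. p x e * (\<Sum>g\<in>fst e. f g)) = (\<Sum>g\<in>UNIV. d_rate p g x * f g)"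
proof -
  have "(\<Sum>e\<in>events. p x e * (\<Sum>g\<in>fst e. f g)) = (\<Sum>e\<in>events. \<Sum>g\<in>UNIV. f g * (p x e * (if g \<in> fst e then 1 else 0)))"
    by (intro sum.cong refl) (simp add: sum_in_ind[where y="fst _"] sum_distrib_left algebra_simps)
  also have "\<dots> = (\<Sum>g\<in>UNIV. f g * (\<Sum>e\<in>events. p x e * (if g \<in> fst e then 1 else 0)))"
    by (subst sum.swap) (simp add: sum_distrib_left)
  finally show ?thesis by (simp add: d_rate_alt mult.commute)
qed

lemma first_order_lim:
  assumes fx: "\<forall>e\<in>events. stepf e x0 = x0" and \<phi>0: "\<phi> x0 = 0"
  shows "((\<lambda>u. (\<Sum>y\<in>UNIV. T u x0 y * \<phi> y) / u) \<longlongrightarrow>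
          (\<Sum>g\<in>UNIV. d_rate p g x0 * (kap x0 g * \<phi> (flip g x0)))) (at_right 0)"
proof -
  define c where "c e y = (\<Sum>g\<in>UNIV. if y = flip g x0 \<and> g \<in> fst e then kap x0 g else 0)" for e :: "'g event" and y
  let ?Y = "UNIV - {x0}"
  have eq: "(\<Sum>y\<in>UNIV. T u x0 y * \<phi> y) / u =
      (\<Sum>y\<in>?Y. \<Sum>e\<in>events. p x0 e * ((\<Prod>k\<in>UNIV. sfb u e x0 k (k\<in>y)) / u) * \<phi> y)" for u
  proof -
    have "(\<Sum>y\<in>UNIV. T u x0 y * \<phi> y) = T u x0 x0 * \<phi> x0 + (\<Sum>y\<in>?Y. T u x0 y * \<phi> y)"
      by (rule sum.remove) auto
    hence "(\<Sum>y\<in>UNIV. T u x0 y * \<phi> y) / u = (\<Sum>y\<in>?Y. T u x0 y * \<phi> y / u)"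
      using \<phi>0 by (simp add: sum_divide_distrib)
    also have "\<dots> = (\<Sum>y\<in>?Y. \<Sum>e\<in>events. p x0 e * ((\<Prod>k\<in>UNIV. sfb u e x0 k (k\<in>y)) / u) * \<phi> y)"
      by (intro sum.cong refl) (simp add: T_def2 sum_distrib_right sum_divide_distrib)
    finally show ?thesis .
  qed
  have lim: "((\<lambda>u. \<Sum>y\<in>?Y. \<Sum>e\<in>events. p x0 e * ((\<Prod>k\<in>UNIV. sfb u e x0 k (k\<in>y)) / u) * \<phi> y)
      \<longlongrightarrow> (\<Sum>y\<in>?Y. \<Sum>e\<in>events. p x0 e * c e y * \<phi> y)) (at_right 0)"
    unfolding c_def by (intro tendsto_intros prod_lim_e) (use fx in auto)
  have val: "(\<Sum>y\<in>?Y. \<Sum>e\<in>events. p x0 e * c e y * \<phi> y) = (\<Sum>g\<in>UNIV. d_rate p g x0 * (kap x0 g * \<phi> (flip g x0)))"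
  proof -
    have inner: "(\<Sum>y\<in>?Y. c e y * \<phi> y) = (\<Sum>g\<in>fst e. kap x0 g * \<phi> (flip g x0))" for e
    proof -
      have "(\<Sum>y\<in>?Y. c e y * \<phi> y) = (\<Sum>g\<in>UNIV. \<Sum>y\<in>?Y. if y = flip g x0 \<and> g \<in> fst e then kap x0 g * \<phi> y else 0)"
        unfolding c_def sum_distrib_right by (subst sum.swap) (rule sum.cong[OF refl], rule sum.cong[OF refl], simp)
      also have "\<dots> = (\<Sum>g\<in>UNIV. if g \<in> fst e then kap x0 g * \<phi> (flip g x0) else 0)"
      proof (rule sum.cong[OF refl])
        fix g
        have "(\<Sum>y\<in>?Y. if y = flip g x0 \<and> g \<in> fst e then kap x0 g * \<phi> y else 0)
            = (\<Sum>y\<in>?Y. if y = flip g x0 then (if g \<in> fst e then kap x0 g * \<phi> y else 0) else 0)"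
          by (intro sum.cong) auto
        also have "\<dots> = (if g \<in> fst e then kap x0 g * \<phi> (flip g x0) else 0)"
          using flip_ne[of g x0] by (subst sum.delta) auto
        finally show "(\<Sum>y\<in>?Y. if y = flip g x0 \<and> g \<in> fst e then kap x0 g * \<phi> y else 0) = (if g \<in> fst e then kap x0 g * \<phi> (flip g x0) else 0)" .
      qed
      also have "\<dots> = (\<Sum>g\<in>fst e. kap x0 g * \<phi> (flip g x0))"
        by (simp add: sum.If_cases)
      finally show ?thesis .
    qed
    have "(\<Sum>y\<in>?Y. \<Sum>e\<in>events. p x0 e * c e y * \<phi> y) = (\<Sum>e\<in>events. p x0 e * (\<Sum>y\<in>?Y. c e y * \<phi> y))"
      by (subst sum.swap) (simp add: sum_distrib_left mult.assoc)
    also have "\<dots> = (\<Sum>e\<in>events. p x0 e * (\<Sum>g\<in>fst e. kap x0 g * \<phi> (flip g x0)))" by (simp add: inner)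
    also have "\<dots> = (\<Sum>g\<in>UNIV. d_rate p g x0 * (kap x0 g * \<phi> (flip g x0)))" by (rule sum_fst_swap)
    finally show ?thesis .
  qed
  show ?thesis unfolding eq using lim val by simp
qed

end

context model2 begin

definition Lam_a :: real where "Lam_a = \<nu> * (\<Sum>g\<in>UNIV. d_rate p g {} * hA {g})"
definition Lam_A :: real where "Lam_A = (1-\<nu>) * (\<Sum>g\<in>UNIV. d_rate p g {} * ha (UNIV - {g}))"

lemma lim_a: "((\<lambda>u. (\<Sum>y\<in>UNIV. T u {} y * hA y) / u) \<longlongrightarrow> Lam_a) (at_right 0)"
proof -
  have "((\<lambda>u. (\<Sum>y\<in>UNIV. T u {} y * hA y) / u) \<longlongrightarrow> (\<Sum>g\<in>UNIV. d_rate p g {} * (kap {} g * hA (flip g {})))) (at_right 0)"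
    by (rule first_order_lim) (auto simp: stepf_empty hA_empty)
  moreover have "(\<Sum>g\<in>UNIV. d_rate p g {} * (kap {} g * hA (flip g {}))) = Lam_a"
    by (simp add: Lam_a_def kap_def flip_def sum_distrib_left algebra_simps)
  ultimately show ?thesis by simp
qed

lemma lim_A: "((\<lambda>u. (\<Sum>y\<in>UNIV. T u UNIV y * (hA y - 1)) / u) \<longlongrightarrow> - Lam_A) (at_right 0)"
proof -
  have "((\<lambda>u. (\<Sum>y\<in>UNIV. T u UNIV y * (hA y - 1)) / u) \<longlongrightarrow> (\<Sum>g\<in>UNIV. d_rate p g UNIV * (kap UNIV g * (hA (flip g UNIV) - 1)))) (at_right 0)"
    by (rule first_order_lim) (auto simp: stepf_UNIV hA_UNIV)
  moreover have "(\<Sum>g\<in>UNIV. d_rate p g UNIV * (kap UNIV g * (hA (flip g UNIV) - 1))) = - Lam_A"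
  proof -
    have h1: "hA (UNIV - {g}) - 1 = - ha (UNIV - {g})" for g using hA_ha[of "UNIV - {g}"] by linarith
    have "(\<Sum>g\<in>UNIV. d_rate p g UNIV * (kap UNIV g * (hA (flip g UNIV) - 1)))
        = (\<Sum>g\<in>UNIV. - ((1-\<nu>) * (d_rate p g {} * ha (UNIV - {g}))))"
      by (rule sum.cong[OF refl]) (simp add: kap_def flip_def d_rate_UNIV h1)
    thus ?thesis by (simp add: Lam_A_def sum_negf sum_distrib_left)
  qed
  ultimately show ?thesis by simp
qed

end

context model2 begin

abbreviation PI where "PI u x \<equiv> pi_MSS0 p \<nu> u x"

definition NN :: real where "NN = real CARD('g set)"
definition nn :: real where "nn = real CARD('g)"
definition mm :: real where "mm = real (length es)"

lemma r_le1: "(\<Sum>y\<in>Trs. TP 0 j z y) \<le> 1"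
proof -
  have "(\<Sum>y\<in>Trs. TP 0 j z y) \<le> (\<Sum>y\<in>UNIV. TP 0 j z y)"
    by (rule sum_mono2) (use tp_nonneg[of 0 j z] in auto)
  thus ?thesis by (simp only: tp_rowsum)
qed

lemma piTrs_upper:
  assumes u: "0 < u" "u \<le> 1"
  shows "cfix * (\<Sum>x\<in>Trs. PI u x) \<le> NN * nn * mm * u"
proof -
  let ?m = "length es"
  have u': "0 \<le> u" "u \<le> 1" using u by auto
  define r where "r j z = (\<Sum>y\<in>Trs. TP 0 j z y)" for j z
  define f where "f z = (\<Sum>j<?m. r j z)" for z
  have rn: "0 \<le> r j z" for j z unfolding r_def by (rule r_nonneg)
  have r1: "r j z \<le> 1" for j z unfolding r_def by (rule r_le1)
  have f0: "0 \<le> f z" for z unfolding f_def by (rule sum_nonneg) (use rn in auto)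
  have fm: "f z \<le> mm" for z
  proof -
    have "f z \<le> (\<Sum>j<?m. 1)" unfolding f_def by (rule sum_mono) (use r1 in auto)
    thus ?thesis by (simp add: mm_def)
  qed
  have Tr: "(\<Sum>z\<in>UNIV. T 0 x z * r j z) = r (Suc j) x" for x j
  proof -
    have "(\<Sum>z\<in>UNIV. T 0 x z * r j z) = (\<Sum>y\<in>Trs. \<Sum>z\<in>UNIV. T 0 x z * TP 0 j z y)"
      unfolding r_def sum_distrib_left by (rule sum.swap)
    also have "\<dots> = r (Suc j) x" unfolding r_def by (intro sum.cong refl) (rule tp_left[symmetric])
    finally show ?thesis .
  qed
  have Tf: "(\<Sum>z\<in>UNIV. T 0 x z * f z) = f x - r 0 x + r ?m x" for x
  proof -
    have "(\<Sum>z\<in>UNIV. T 0 x z * f z) = (\<Sum>j<?m. \<Sum>z\<in>UNIV. T 0 x z * r j z)"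
      unfolding f_def sum_distrib_left by (rule sum.swap)
    also have "\<dots> = (\<Sum>j<?m. r (Suc j) x)" by (simp add: Tr)
    also have "\<dots> = (\<Sum>j<Suc ?m. r j x) - r 0 x" by (simp only: sum.lessThan_Suc_shift)
    also have "\<dots> = f x + r ?m x - r 0 x" by (simp add: f_def)
    finally show ?thesis by simp
  qed
  have r0: "r 0 x = (if x \<in> Trs then 1 else 0)" for x
  proof -
    have "r 0 x = (\<Sum>y\<in>Trs. if x = y then 1 else 0)" by (simp add: r_def)
    also have "\<dots> = (if x \<in> Trs then 1 else 0)" by (simp add: sum.delta)
    finally show ?thesis .
  qed
  have st: "(\<Sum>x\<in>UNIV. PI u x * (\<Sum>z\<in>UNIV. T u x z * f z)) = (\<Sum>x\<in>UNIV. PI u x * f x)"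
    by (rule invar_expect) (use piu_stat[OF u] in blast)
  define A where "A = (\<Sum>x\<in>UNIV. PI u x * (r ?m x - r 0 x))"
  define B where "B = (\<Sum>x\<in>UNIV. PI u x * (\<Sum>z\<in>UNIV. (T u x z - T 0 x z) * f z))"
  have AB: "A + B = 0"
  proof -
    have "(\<Sum>z\<in>UNIV. T u x z * f z) - f x = (r ?m x - r 0 x) + (\<Sum>z\<in>UNIV. (T u x z - T 0 x z) * f z)" for x
      using Tf[of x] by (simp add: left_diff_distrib sum_subtractf)
    hence "A + B = (\<Sum>x\<in>UNIV. PI u x * ((\<Sum>z\<in>UNIV. T u x z * f z) - f x))"
      by (simp add: A_def B_def sum.distrib[symmetric] distrib_left)
    also have "\<dots> = 0" using st by (simp add: right_diff_distrib sum_subtractf)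
    finally show ?thesis .
  qed
  have Ale: "A \<le> - cfix * (\<Sum>x\<in>Trs. PI u x)"
  proof -
    have rmE: "r ?m {} = 0" "r ?m UNIV = 0" unfolding r_def by (simp_all add: tp0_Trs_empty tp0_Trs_UNIV)
    have "A = (\<Sum>x\<in>Trs. PI u x * (r ?m x - r 0 x))"
      unfolding A_def sum_split3[of "\<lambda>x. PI u x * (r ?m x - r 0 x)"] using rmE r0 by (simp add: Trs_def)
    also have "\<dots> \<le> (\<Sum>x\<in>Trs. PI u x * (- cfix))"
    proof (rule sum_mono)
      fix x assume x: "x \<in> Trs"
      have "r ?m x - r 0 x \<le> - cfix" using r_m[OF x] r0[of x] x by (simp add: r_def)
      thus "PI u x * (r ?m x - r 0 x) \<le> PI u x * (- cfix)"
        by (rule mult_left_mono) (use piu_nonneg[OF u] in auto)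
    qed
    also have "\<dots> = - cfix * (\<Sum>x\<in>Trs. PI u x)" by (simp add: sum_distrib_left sum_negf mult.commute)
    finally show ?thesis .
  qed
  have Ble: "B \<le> NN * nn * mm * u"
  proof -
    have "B \<le> (\<Sum>x\<in>UNIV. PI u x * (\<Sum>z\<in>(UNIV::'g set set). nn * u * mm))"
    proof (unfold B_def, rule sum_mono, rule mult_left_mono)
      fix x
      show "(\<Sum>z\<in>UNIV. (T u x z - T 0 x z) * f z) \<le> (\<Sum>z\<in>(UNIV::'g set set). nn * u * mm)"
      proof (rule sum_mono)
        fix z
        have "(T u x z - T 0 x z) * f z \<le> \<bar>T u x z - T 0 x z\<bar> * f z"
          using f0[of z] by (intro mult_right_mono) auto
        also have "\<dots> \<le> (nn * u) * mm"
          using T_lip[OF u', of x z] f0[of z] fm[of z] u by (intro mult_mono) (auto simp: nn_def)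
        finally show "(T u x z - T 0 x z) * f z \<le> nn * u * mm" .
      qed
      show "0 \<le> PI u x" by (rule piu_nonneg[OF u])
    qed
    also have "\<dots> = (\<Sum>x\<in>UNIV. PI u x) * (NN * (nn * u * mm))"
      by (simp add: NN_def sum_distrib_right)
    also have "\<dots> = NN * nn * mm * u"
      using piu_stat[OF u] by simp
    finally show ?thesis .
  qed
  show ?thesis using AB Ale Ble by linarith
qed

lemma g0_Trs:
  assumes "Trs \<noteq> {}"
  shows "{g0} \<in> Trs" "UNIV - {g0} \<in> Trs" "{g0} \<noteq> UNIV - {g0}"
proof -
  have ne: "{g0} \<noteq> UNIV"
  proof
    assume h: "{g0} = UNIV"
    have "x = {} \<or> x = UNIV" for x :: "'g set"
    proof -
      have "x \<subseteq> {g0}" using h by simp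
      thus ?thesis using h by (metis subset_singletonD)
    qed
    thus False using assms by (auto simp: Trs_def)
  qed
  show "{g0} \<in> Trs" using ne by (auto simp: Trs_def)
  show "UNIV - {g0} \<in> Trs" using ne by (auto simp: Trs_def)
  show "{g0} \<noteq> UNIV - {g0}" by auto
qed

definition kk :: real where "kk = c0 * mnu ^ CARD('g)"

lemma kk_pos: "0 < kk" using c0_pos mnu_pos by (simp add: kk_def)

lemma piTrs_lower:
  assumes tr: "Trs \<noteq> {}" and u: "0 < u" "u \<le> 1"
  shows "kk * u * (PI u {} + PI u UNIV) \<le> (\<Sum>x\<in>Trs. PI u x)"
proof -
  have u': "0 \<le> u" "u \<le> 1" using u by auto
  obtain e where e: "e \<in> set es" "g0 \<in> fst e" using g0_in by blast
  have ev: "e \<in> events" using e es_ev by auto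
  have st: "PI u y = (\<Sum>x\<in>UNIV. PI u x * T u x y)" for y
    using piu_stat[OF u] by (simp add: invar_def)
  have one: "PI u x0 * T u x0 y \<le> PI u y" for x0 y
  proof -
    have "PI u x0 * T u x0 y \<le> (\<Sum>x\<in>UNIV. PI u x * T u x y)"
      by (rule member_le_sum) (auto intro!: mult_nonneg_nonneg piu_nonneg[OF u] T_nonneg u')
    thus ?thesis using st[of y] by simp
  qed
  have t1: "kk * u \<le> T u {} {g0}"
  proof -
    have "kk * u \<le> p {} e * (mnu ^ CARD('g) * u)"
      unfolding kk_def using c0_le[OF e(1), of "{}"] mnu_pos u by (simp add: mult.assoc mult_right_mono)
    also have "\<dots> \<le> T u {} {g0}" by (rule T_lb1[OF ev u' e(2)]) (auto simp: stepf_def)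
    finally show ?thesis .
  qed
  have t2: "kk * u \<le> T u UNIV (UNIV - {g0})"
  proof -
    have "kk * u \<le> p UNIV e * (mnu ^ CARD('g) * u)"
      unfolding kk_def using c0_le[OF e(1), of "UNIV"] mnu_pos u by (simp add: mult.assoc mult_right_mono)
    also have "\<dots> \<le> T u UNIV (UNIV - {g0})" by (rule T_lb1[OF ev u' e(2)]) (auto simp: stepf_def)
    finally show ?thesis .
  qed
  have "kk * u * PI u {} \<le> PI u {g0}"
    using one[of "{}" "{g0}"] t1 piu_nonneg[OF u, of "{}"] by (smt (verit) mult.commute mult_left_mono)
  moreover have "kk * u * PI u UNIV \<le> PI u (UNIV - {g0})"
    using one[of UNIV "UNIV - {g0}"] t2 piu_nonneg[OF u, of UNIV] by (smt (verit) mult.commute mult_left_mono)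
  moreover have "PI u {g0} + PI u (UNIV - {g0}) \<le> (\<Sum>x\<in>Trs. PI u x)"
  proof -
    have "(\<Sum>x\<in>{{g0}, UNIV - {g0}}. PI u x) \<le> (\<Sum>x\<in>Trs. PI u x)"
      by (rule sum_mono2) (use g0_Trs[OF tr] piu_nonneg[OF u] in auto)
    thus ?thesis using g0_Trs(3)[OF tr] by simp
  qed
  ultimately show ?thesis by (simp add: distrib_left)
qed

lemma pi_split: "0 < u \<Longrightarrow> u \<le> 1 \<Longrightarrow> PI u {} + PI u UNIV + (\<Sum>x\<in>Trs. PI u x) = 1"
  using piu_stat[of u] sum_split3[of "PI u"] by simp

lemma piTrs_pos:
  assumes tr: "Trs \<noteq> {}" and u: "0 < u" "u \<le> 1"
  shows "0 < (\<Sum>x\<in>Trs. PI u x)"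
proof (cases "PI u {} + PI u UNIV = 0")
  case True thus ?thesis using pi_split[OF u] by simp
next
  case False
  hence "0 < PI u {} + PI u UNIV" using piu_nonneg[OF u, of "{}"] piu_nonneg[OF u, of UNIV] by simp
  hence "0 < kk * u * (PI u {} + PI u UNIV)" using kk_pos u by simp
  thus ?thesis using piTrs_lower[OF tr u] by simp
qed

definition pi0 :: "'g set \<Rightarrow> real" where "pi0 x = Lim (at_right 0) (\<lambda>u. PI u x)"

lemma pi0_lim: "((\<lambda>u. PI u x) \<longlongrightarrow> pi0 x) (at_right 0)"
proof -
  obtain L where L: "((\<lambda>u. PI u x) \<longlongrightarrow> L) (at_right 0)" using lim_piu by blast
  hence "pi0 x = L" unfolding pi0_def by (rule tendsto_Lim[OF trivial_limit_at_right_real])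
  thus ?thesis using L by simp
qed

lemma ev01: "eventually (\<lambda>u. 0 < u \<and> u \<le> 1) (at_right (0::real))"
  using ev_at_right01 by eventually_elim auto

lemma cfix_pos': "0 < cfix" by (rule cfix_pos)

lemma piTrs_tendsto: "((\<lambda>u. \<Sum>x\<in>Trs. PI u x) \<longlongrightarrow> 0) (at_right 0)"
proof (rule real_tendsto_sandwich[where f="\<lambda>_. 0" and h="\<lambda>u. NN * nn * mm * u / cfix"])
  show "eventually (\<lambda>u. 0 \<le> (\<Sum>x\<in>Trs. PI u x)) (at_right 0)"
    using ev01 by eventually_elim (auto intro!: sum_nonneg piu_nonneg)
  show "eventually (\<lambda>u. (\<Sum>x\<in>Trs. PI u x) \<le> NN * nn * mm * u / cfix) (at_right 0)"
    using ev01
  proof eventually_elim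
    case (elim u)
    thus ?case using piTrs_upper[of u] cfix_pos by (simp add: field_simps mult.commute)
  qed
  show "((\<lambda>_. 0) \<longlongrightarrow> (0::real)) (at_right 0)" by simp
  have "((\<lambda>u. NN * nn * mm * u / cfix) \<longlongrightarrow> NN * nn * mm * 0 / cfix) (at_right 0)"
    by (intro tendsto_intros) (use cfix_pos in auto)
  thus "((\<lambda>u. NN * nn * mm * u / cfix) \<longlongrightarrow> 0) (at_right 0)" by simp
qed

lemma pi0_Trs: "x \<in> Trs \<Longrightarrow> pi0 x = 0"
proof -
  assume x: "x \<in> Trs"
  have "((\<lambda>u. PI u x) \<longlongrightarrow> 0) (at_right 0)"
  proof (rule real_tendsto_sandwich[where f="\<lambda>_. 0" and h="\<lambda>u. \<Sum>x\<in>Trs. PI u x"])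
    show "eventually (\<lambda>u. 0 \<le> PI u x) (at_right 0)"
      using ev01 by eventually_elim (auto intro!: piu_nonneg)
    show "eventually (\<lambda>u. PI u x \<le> (\<Sum>x\<in>Trs. PI u x)) (at_right 0)"
      using ev01 by eventually_elim (auto intro!: member_le_sum piu_nonneg x)
  qed (auto intro: piTrs_tendsto)
  thus ?thesis using pi0_lim tendsto_unique[OF trivial_limit_at_right_real] by blast
qed

lemma pi0_nonneg: "0 \<le> pi0 x"
  by (rule tendsto_lowerbound[OF pi0_lim _ trivial_limit_at_right_real])
     (use ev01 in \<open>eventually_elim, auto intro: piu_nonneg\<close>)

lemma pi0_sum: "pi0 {} + pi0 UNIV = 1"
proof -
  have "((\<lambda>u. PI u {} + PI u UNIV + (\<Sum>x\<in>Trs. PI u x)) \<longlongrightarrow> pi0 {} + pi0 UNIV + 0) (at_right 0)"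
    by (intro tendsto_intros pi0_lim piTrs_tendsto)
  moreover have "eventually (\<lambda>u. PI u {} + PI u UNIV + (\<Sum>x\<in>Trs. PI u x) = 1) (at_right 0)"
    using ev01 by eventually_elim (simp add: pi_split)
  ultimately have "((\<lambda>u. 1) \<longlongrightarrow> pi0 {} + pi0 UNIV + 0) (at_right (0::real))"
    by (rule Lim_transform_eventually)
  moreover have "((\<lambda>u. 1) \<longlongrightarrow> (1::real)) (at_right (0::real))" by simp
  ultimately have "pi0 {} + pi0 UNIV + 0 = 1" by (rule tendsto_unique[OF trivial_limit_at_right_real])
  thus ?thesis by simp
qed

end

lemma key_alg:
  fixes q \<nu> A a :: real
  assumes "0 < \<nu>" "\<nu> < 1" "0 \<le> q" "q \<le> 1" "0 < A" "0 < a" and eq: "(1-q)*\<nu>*A = q*(1-\<nu>)*a"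
  shows "\<nu> < q \<longleftrightarrow> a < A"
proof
  assume q: "\<nu> < q"
  show "a < A"
  proof (rule ccontr)
    assume "\<not> a < A"
    hence "(1-q)*\<nu>*A \<le> (1-q)*\<nu>*a" using assms by (intro mult_left_mono) auto
    hence "q*(1-\<nu>)*a \<le> (1-q)*\<nu>*a" using eq by simp
    hence "q*(1-\<nu>) \<le> (1-q)*\<nu>" using assms(6) by simp
    thus False using q by (simp add: algebra_simps)
  qed
next
  assume aA: "a < A"
  show "\<nu> < q"
  proof (rule ccontr)
    assume "\<not> \<nu> < q"
    hence qn: "q \<le> \<nu>" by simp
    have "q*(1-\<nu>)*a \<le> q*(1-\<nu>)*A" using assms aA by (intro mult_left_mono) auto
    hence "(1-q)*\<nu>*A \<le> q*(1-\<nu>)*A" using eq by simp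
    hence "(1-q)*\<nu> \<le> q*(1-\<nu>)" using assms(5) by simp
    hence "q = \<nu>" using qn by (simp add: algebra_simps)
    hence "(1-\<nu>)*\<nu>*A = (1-\<nu>)*\<nu>*a" using eq by (simp add: algebra_simps)
    hence "A = a" using assms(1,2) by simp
    thus False using aA by simp
  qed
qed

lemma sign_lemma:
  fixes S q R :: "real \<Rightarrow> real"
  assumes R: "(R \<longlongrightarrow> ER) (at_right 0)" and S: "(S \<longlongrightarrow> S0) (at_right 0)"
    and eq: "eventually (\<lambda>u. R u = S u * q u) (at_right 0)"
    and bnd: "eventually (\<lambda>u. a \<le> q u \<and> q u \<le> b) (at_right 0)" and a: "0 < a"
  shows "0 < ER \<longleftrightarrow> 0 < S0"
proof
  assume S0: "0 < S0"
  have "eventually (\<lambda>u. S0/2 < S u) (at_right 0)" using S S0 by (intro order_tendstoD(1)) auto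
  hence "eventually (\<lambda>u. S0/2 * a \<le> R u) (at_right 0)" using eq bnd
  proof eventually_elim
    case (elim u)
    have "S0/2 * a \<le> S u * a" using elim a by (intro mult_right_mono) auto
    also have "\<dots> \<le> S u * q u" using elim S0 by (intro mult_left_mono) auto
    finally show ?case using elim by simp
  qed
  hence "S0/2 * a \<le> ER" by (rule tendsto_lowerbound[OF R _ trivial_limit_at_right_real])
  moreover have "0 < S0/2 * a" using S0 a by simp
  ultimately show "0 < ER" by linarith
next
  assume ER: "0 < ER"
  show "0 < S0"
  proof (rule ccontr)
    assume "\<not> 0 < S0"
    hence S0: "S0 \<le> 0" by simp
    have lim2: "((\<lambda>u. max (S u) 0 * b) \<longlongrightarrow> max S0 0 * b) (at_right 0)" by (intro tendsto_intros S)
    have "eventually (\<lambda>u. R u \<le> max (S u) 0 * b) (at_right 0)" using eq bnd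
    proof eventually_elim
      case (elim u)
      show ?case
      proof (cases "0 \<le> S u")
        case True
        hence "S u * q u \<le> S u * b" using elim by (intro mult_left_mono) auto
        thus ?thesis using elim True by simp
      next
        case False
        hence "S u * q u \<le> 0" using elim a by (intro mult_nonpos_nonneg) auto
        thus ?thesis using elim False by simp
      qed
    qed
    hence "ER \<le> max S0 0 * b" by (rule tendsto_le[OF trivial_limit_at_right_real lim2 R])
    thus False using S0 ER by simp
  qed
qed

context model2 begin

lemma Tu_hA_diff:
  assumes u: "0 \<le> u" "u \<le> 1"
  shows "\<bar>(\<Sum>y\<in>UNIV. T u x y * hA y) - hA x\<bar> \<le> NN * nn * u"
proof -
  have "(\<Sum>y\<in>UNIV. T u x y * hA y) - hA x = (\<Sum>y\<in>UNIV. (T u x y - T 0 x y) * hA y)"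
    by (subst (2) hA_harm) (simp add: sum_subtractf left_diff_distrib)
  also have "\<bar>\<dots>\<bar> \<le> (\<Sum>y\<in>UNIV. \<bar>(T u x y - T 0 x y) * hA y\<bar>)" by (rule sum_abs)
  also have "\<dots> \<le> (\<Sum>y\<in>(UNIV::'g set set). nn * u)"
  proof (rule sum_mono)
    fix y
    have "\<bar>(T u x y - T 0 x y) * hA y\<bar> = \<bar>T u x y - T 0 x y\<bar> * hA y" using hA_nonneg by (simp add: abs_mult)
    also have "\<dots> \<le> nn * u * 1"
      using T_lip[OF u, of x y] hA_nonneg[of y] hA_le1[of y] u by (intro mult_mono) (auto simp: nn_def)
    finally show "\<bar>(T u x y - T 0 x y) * hA y\<bar> \<le> nn * u" by simp
  qed
  also have "\<dots> = NN * nn * u" by (simp add: NN_def)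
  finally show ?thesis .
qed

lemma pi0_rel: "pi0 {} * Lam_a = pi0 UNIV * Lam_A"
proof -
  define \<Phi> where "\<Phi> u x = ((\<Sum>y\<in>UNIV. T u x y * hA y) - hA x) / u" for u x
  have zero: "PI u {} * \<Phi> u {} + PI u UNIV * \<Phi> u UNIV + (\<Sum>x\<in>Trs. PI u x * \<Phi> u x) = 0"
    if u: "0 < u" "u \<le> 1" for u
  proof -
    have "(\<Sum>x\<in>UNIV. PI u x * (\<Sum>y\<in>UNIV. T u x y * hA y)) = (\<Sum>x\<in>UNIV. PI u x * hA x)"
      by (rule invar_expect) (use piu_stat[OF u] in blast)
    hence "(\<Sum>x\<in>UNIV. PI u x * ((\<Sum>y\<in>UNIV. T u x y * hA y) - hA x)) = 0"
      by (simp add: right_diff_distrib sum_subtractf)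
    moreover have "(\<Sum>x\<in>UNIV. PI u x * \<Phi> u x) = (\<Sum>x\<in>UNIV. PI u x * ((\<Sum>y\<in>UNIV. T u x y * hA y) - hA x)) / u"
      unfolding \<Phi>_def by (simp add: sum_divide_distrib)
    ultimately have "(\<Sum>x\<in>UNIV. PI u x * \<Phi> u x) = 0" by simp
    thus ?thesis by (simp add: sum_split3[of "\<lambda>x. PI u x * \<Phi> u x"])
  qed
  have l1: "((\<lambda>u. \<Phi> u {}) \<longlongrightarrow> Lam_a) (at_right 0)"
    unfolding \<Phi>_def using lim_a by (simp add: hA_empty)
  have l2: "((\<lambda>u. \<Phi> u UNIV) \<longlongrightarrow> - Lam_A) (at_right 0)"
  proof -
    have "(\<Sum>y\<in>UNIV. T u UNIV y * (hA y - 1)) = (\<Sum>y\<in>UNIV. T u UNIV y * hA y) - hA UNIV" for u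
      by (simp add: right_diff_distrib sum_subtractf T_rowsum hA_UNIV)
    thus ?thesis using lim_A unfolding \<Phi>_def by simp
  qed
  have l3: "((\<lambda>u. \<Sum>x\<in>Trs. PI u x * \<Phi> u x) \<longlongrightarrow> 0) (at_right 0)"
  proof (rule Lim_null_comparison)
    show "eventually (\<lambda>u. norm (\<Sum>x\<in>Trs. PI u x * \<Phi> u x) \<le> NN * nn * (\<Sum>x\<in>Trs. PI u x)) (at_right 0)"
      using ev01
    proof eventually_elim
      case (elim u)
      hence u: "0 < u" "u \<le> 1" by auto
      have "norm (\<Sum>x\<in>Trs. PI u x * \<Phi> u x) \<le> (\<Sum>x\<in>Trs. \<bar>PI u x * \<Phi> u x\<bar>)" by (simp add: sum_abs)
      also have "\<dots> \<le> (\<Sum>x\<in>Trs. PI u x * (NN * nn))"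
      proof (rule sum_mono)
        fix x
        have "\<bar>\<Phi> u x\<bar> \<le> NN * nn"
          using Tu_hA_diff[of u x] u by (simp add: \<Phi>_def abs_divide divide_le_eq mult.commute)
        thus "\<bar>PI u x * \<Phi> u x\<bar> \<le> PI u x * (NN * nn)"
          using piu_nonneg[OF u, of x] by (simp add: abs_mult mult_left_mono)
      qed
      also have "\<dots> = NN * nn * (\<Sum>x\<in>Trs. PI u x)" by (simp add: sum_distrib_left mult.commute)
      finally show ?case .
    qed
    have "((\<lambda>u. NN * nn * (\<Sum>x\<in>Trs. PI u x)) \<longlongrightarrow> NN * nn * 0) (at_right 0)"
      by (intro tendsto_intros piTrs_tendsto)
    thus "((\<lambda>u. NN * nn * (\<Sum>x\<in>Trs. PI u x)) \<longlongrightarrow> 0) (at_right 0)" by simp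
  qed
  have "((\<lambda>u. PI u {} * \<Phi> u {} + PI u UNIV * \<Phi> u UNIV + (\<Sum>x\<in>Trs. PI u x * \<Phi> u x))
      \<longlongrightarrow> pi0 {} * Lam_a + pi0 UNIV * (- Lam_A) + 0) (at_right 0)"
    by (intro tendsto_intros pi0_lim l1 l2 l3)
  moreover have "eventually (\<lambda>u. PI u {} * \<Phi> u {} + PI u UNIV * \<Phi> u UNIV + (\<Sum>x\<in>Trs. PI u x * \<Phi> u x) = 0) (at_right 0)"
    using ev01 by eventually_elim (simp add: zero)
  ultimately have "((\<lambda>u. 0) \<longlongrightarrow> pi0 {} * Lam_a + pi0 UNIV * (- Lam_A) + 0) (at_right (0::real))"
    by (rule Lim_transform_eventually)
  hence "pi0 {} * Lam_a + pi0 UNIV * (- Lam_A) + 0 = 0"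
    using tendsto_unique[OF trivial_limit_at_right_real] tendsto_const by blast
  thus ?thesis by simp
qed

lemma pi0_le1: "pi0 x \<le> 1"
  by (rule tendsto_upperbound[OF pi0_lim _ trivial_limit_at_right_real])
     (use ev01 in \<open>eventually_elim, auto intro: piu_le1\<close>)

lemma key_equiv: "\<nu> < pi0 UNIV \<longleftrightarrow> rho_a p \<nu> < rho_A p \<nu>"
proof (rule key_alg)
  show "0 < \<nu>" "\<nu> < 1" using nu0 nu1 by auto
  show "0 \<le> pi0 UNIV" "pi0 UNIV \<le> 1" by (rule pi0_nonneg, rule pi0_le1)
  show "0 < rho_A p \<nu>" "0 < rho_a p \<nu>" by (rule rhoA_pos, rule rhoa_pos)
  have la: "Lam_a = \<nu> * bo * rho_A p \<nu>" using bo_pos by (simp add: Lam_a_def rhoA_eq)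
  have lA: "Lam_A = (1-\<nu>) * bo * rho_a p \<nu>" using bo_pos by (simp add: Lam_A_def rhoa_eq)
  have "pi0 {} = 1 - pi0 UNIV" using pi0_sum by simp
  hence "(1 - pi0 UNIV) * (\<nu> * bo * rho_A p \<nu>) = pi0 UNIV * ((1-\<nu>) * bo * rho_a p \<nu>)"
    using pi0_rel la lA by simp
  hence "bo * ((1 - pi0 UNIV) * \<nu> * rho_A p \<nu>) = bo * (pi0 UNIV * (1-\<nu>) * rho_a p \<nu>)"
    by (simp add: algebra_simps)
  thus "(1 - pi0 UNIV) * \<nu> * rho_A p \<nu> = pi0 UNIV * (1-\<nu>) * rho_a p \<nu>" using bo_pos by simp
qed

end

context model2 begin

definition Wt :: "('g \<Rightarrow> real) \<Rightarrow> real" where "Wt w = (\<Sum>g\<in>UNIV. w g * d_rate p g {})"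

lemma Bw_empty: "Bw w {} = 0" by (simp add: Bw_def)
lemma Dw_empty: "Dw w {} = 0" by (simp add: Dw_def)
lemma Nw_empty: "Nw w {} = Wt w" by (simp add: Nw_def Wt_def)
lemma Nw_UNIV: "Nw w UNIV = Wt w" by (simp add: Nw_def Wt_def d_rate_UNIV)
lemma Dw_UNIV: "Dw w UNIV = Wt w" by (simp add: Dw_def Wt_def d_rate_UNIV)
lemma Bw_UNIV: "Bw w UNIV = Wt w"
proof -
  have "Bw w UNIV = (\<Sum>g\<in>UNIV. \<Sum>h\<in>UNIV. e_rate p h g UNIV * w g)"
    unfolding Bw_def by (rule sum.swap)
  also have "\<dots> = (\<Sum>g\<in>UNIV. w g * d_rate p g UNIV)"
    by (simp add: d_rate_def sum_distrib_left mult.commute)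
  finally show ?thesis by (simp add: Wt_def d_rate_UNIV)
qed

definition S :: "('g \<Rightarrow> real) \<Rightarrow> real \<Rightarrow> real" where
  "S w u = (\<Sum>x\<in>UNIV. PI u x * (Bw w x - \<nu> * Nw w x))"

lemma S_lim: "((\<lambda>u. S w u) \<longlongrightarrow> Wt w * (pi0 UNIV - \<nu>)) (at_right 0)"
proof -
  have "((\<lambda>u. S w u) \<longlongrightarrow> (\<Sum>x\<in>UNIV. pi0 x * (Bw w x - \<nu> * Nw w x))) (at_right 0)"
    unfolding S_def by (intro tendsto_intros pi0_lim)
  moreover have "(\<Sum>x\<in>UNIV. pi0 x * (Bw w x - \<nu> * Nw w x)) = Wt w * (pi0 UNIV - \<nu>)"
  proof -
    have "(\<Sum>x\<in>Trs. pi0 x * (Bw w x - \<nu> * Nw w x)) = 0" by (rule sum.neutral) (simp add: pi0_Trs)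
    hence "(\<Sum>x\<in>UNIV. pi0 x * (Bw w x - \<nu> * Nw w x)) = pi0 {} * (- \<nu> * Wt w) + pi0 UNIV * (Wt w - \<nu> * Wt w)"
      by (simp add: sum_split3[of "\<lambda>x. pi0 x * (Bw w x - \<nu> * Nw w x)"] Bw_empty Nw_empty Bw_UNIV Nw_UNIV)
    also have "\<dots> = Wt w * (pi0 UNIV - \<nu> * (pi0 {} + pi0 UNIV))" by (simp add: algebra_simps)
    finally show ?thesis using pi0_sum by simp
  qed
  ultimately show ?thesis by simp
qed

lemma Ef_pos:
  assumes "0 < u" "u \<le> 1"
  shows "E_MSS p \<nu> (\<lambda>x. Bw w x - Dw w x) u = u * S w u"
proof -
  have "E_MSS p \<nu> (\<lambda>x. Bw w x - Dw w x) u = (\<Sum>x\<in>UNIV. PI u x * (Bw w x - Dw w x))"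
    using assms by (simp add: E_MSS_def pi_MSS_def)
  also have "\<dots> = u * S w u" unfolding S_def
    by (rule stat_drift) (use piu_stat[OF assms] in blast)
  finally show ?thesis .
qed

lemma pi_MSS_0: "pi_MSS p \<nu> 0 x = pi0 x" by (simp add: pi_MSS_def pi0_def)

lemma Ef_0: "E_MSS p \<nu> (\<lambda>x. Bw w x - Dw w x) 0 = 0"
proof -
  have "(\<Sum>x\<in>Trs. pi0 x * (Bw w x - Dw w x)) = 0" by (rule sum.neutral) (simp add: pi0_Trs)
  thus ?thesis unfolding E_MSS_def pi_MSS_0
    by (simp add: sum_split3[of "\<lambda>x. pi0 x * (Bw w x - Dw w x)"] Bw_empty Dw_empty Bw_UNIV Dw_UNIV)
qed

lemma at01: "at (0::real) within {0..1} = at_right 0"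
  by (rule at_within_Icc_at_right) simp

lemma Ef_quot:
  "((\<lambda>y. (E_MSS p \<nu> (\<lambda>x. Bw w x - Dw w x) y - E_MSS p \<nu> (\<lambda>x. Bw w x - Dw w x) 0) / (y - 0))
     \<longlongrightarrow> Wt w * (pi0 UNIV - \<nu>)) (at_right 0)"
proof -
  have "eventually (\<lambda>y. S w y = (E_MSS p \<nu> (\<lambda>x. Bw w x - Dw w x) y - E_MSS p \<nu> (\<lambda>x. Bw w x - Dw w x) 0) / (y - 0)) (at_right 0)"
    using ev01 by eventually_elim (simp add: Ef_pos Ef_0)
  thus ?thesis by (rule Lim_transform_eventually[OF S_lim])
qed

lemma Ef_deriv_iff:
  assumes W: "0 < Wt w"
  shows "(\<exists>D. (E_MSS p \<nu> (\<lambda>x. Bw w x - Dw w x) has_real_derivative D) (at 0 within {0..1}) \<and> D > 0)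
         \<longleftrightarrow> \<nu> < pi0 UNIV"
proof -
  have uniq: "D = Wt w * (pi0 UNIV - \<nu>)"
    if "(E_MSS p \<nu> (\<lambda>x. Bw w x - Dw w x) has_real_derivative D) (at 0 within {0..1})" for D
  proof -
    have "((\<lambda>y. (E_MSS p \<nu> (\<lambda>x. Bw w x - Dw w x) y - E_MSS p \<nu> (\<lambda>x. Bw w x - Dw w x) 0) / (y - 0)) \<longlongrightarrow> D) (at_right 0)"
      using that unfolding has_field_derivative_iff at01 .
    thus ?thesis using Ef_quot tendsto_unique[OF trivial_limit_at_right_real] by blast
  qed
  have ex: "(E_MSS p \<nu> (\<lambda>x. Bw w x - Dw w x) has_real_derivative Wt w * (pi0 UNIV - \<nu>)) (at 0 within {0..1})"
    unfolding has_field_derivative_iff at01 by (rule Ef_quot)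
  show ?thesis
  proof
    assume "\<exists>D. (E_MSS p \<nu> (\<lambda>x. Bw w x - Dw w x) has_real_derivative D) (at 0 within {0..1}) \<and> D > 0"
    then obtain D where "(E_MSS p \<nu> (\<lambda>x. Bw w x - Dw w x) has_real_derivative D) (at 0 within {0..1})" "D > 0" by blast
    hence "0 < Wt w * (pi0 UNIV - \<nu>)" using uniq by simp
    thus "\<nu> < pi0 UNIV" using W by (simp add: zero_less_mult_iff)
  next
    assume "\<nu> < pi0 UNIV"
    hence "0 < Wt w * (pi0 UNIV - \<nu>)" using W by simp
    thus "\<exists>D. (E_MSS p \<nu> (\<lambda>x. Bw w x - Dw w x) has_real_derivative D) (at 0 within {0..1}) \<and> D > 0"
      using ex by blast
  qed
qed

lemma Trs_eq: "UNIV - {{}, UNIV} = Trs" by (simp add: Trs_def)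

lemma sum_drift_Trs:
  "(\<Sum>x\<in>UNIV. PI u x * (Bw w x - Dw w x)) = (\<Sum>x\<in>Trs. PI u x * (Bw w x - Dw w x))"
  by (simp add: sum_split3[of "\<lambda>x. PI u x * (Bw w x - Dw w x)"] Bw_empty Dw_empty Bw_UNIV Dw_UNIV)

lemma NNpos: "0 < NN" and nnpos: "0 < nn" and mmpos: "0 < mm"
  using es_ne by (auto simp: NN_def nn_def mm_def)

lemma E_RMC_iff:
  assumes W: "0 < Wt w"
  shows "0 < E_RMC p \<nu> (\<lambda>x. Bw w x - Dw w x) \<longleftrightarrow> \<nu> < pi0 UNIV"
proof (cases "Trs = {}")
  case True
  have E0: "E_RMC p \<nu> (\<lambda>x. Bw w x - Dw w x) = 0" by (simp add: E_RMC_def Trs_eq True)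
  have "eventually (\<lambda>u. S w u = 0) (at_right 0)"
    using ev01
  proof eventually_elim
    case (elim u)
    hence u: "0 < u" "u \<le> 1" by auto
    have "u * S w u = (\<Sum>x\<in>UNIV. PI u x * (Bw w x - Dw w x))" unfolding S_def
      by (rule stat_drift[symmetric]) (use piu_stat[OF u] in blast)
    also have "\<dots> = 0" by (simp add: sum_drift_Trs True)
    finally show ?case using u by simp
  qed
  hence "((\<lambda>u. 0) \<longlongrightarrow> Wt w * (pi0 UNIV - \<nu>)) (at_right (0::real))"
    using S_lim by (rule Lim_transform_eventually[rotated])
  hence "Wt w * (pi0 UNIV - \<nu>) = 0"
    using tendsto_unique[OF trivial_limit_at_right_real] tendsto_const by blast
  hence "pi0 UNIV = \<nu>" using W by simp
  thus ?thesis using E0 by simp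
next
  case False
  define f where "f x = Bw w x - Dw w x" for x
  define pT where "pT u = (\<Sum>x\<in>Trs. PI u x)" for u
  have pTpos: "0 < pT u" if "0 < u" "u \<le> 1" for u unfolding pT_def by (rule piTrs_pos[OF False that])
  have Lx: "\<exists>L. ((\<lambda>u. PI u x / pT u) \<longlongrightarrow> L) (at_right 0)" if "x \<in> Trs" for x
    unfolding pT_def by (rule lim_ratio) (use piTrs_pos[OF False] that in auto)
  define L where "L x = Lim (at_right 0) (\<lambda>u. PI u x / pT u)" for x
  have Llim: "((\<lambda>u. PI u x / pT u) \<longlongrightarrow> L x) (at_right 0)" if xT: "x \<in> Trs" for x
  proof -
    obtain L' where L': "((\<lambda>u. PI u x / pT u) \<longlongrightarrow> L') (at_right 0)" using Lx[OF xT] by blast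
    hence "L x = L'" unfolding L_def by (rule tendsto_Lim[OF trivial_limit_at_right_real])
    thus ?thesis using L' by simp
  qed
  have RMC: "pi_RMC p \<nu> x = L x" if xT: "x \<in> Trs" for x
  proof -
    have "eventually (\<lambda>u. PI u x / pT u = pi_MSS0 p \<nu> u x / (1 - pi_MSS0 p \<nu> u {} - pi_MSS0 p \<nu> u UNIV)) (at_right 0)"
      using ev01
    proof eventually_elim
      case (elim u)
      hence "pT u = 1 - PI u {} - PI u UNIV" using pi_split[of u] by (simp add: pT_def)
      thus ?case by simp
    qed
    hence "((\<lambda>u. pi_MSS0 p \<nu> u x / (1 - pi_MSS0 p \<nu> u {} - pi_MSS0 p \<nu> u UNIV)) \<longlongrightarrow> L x) (at_right 0)"
      by (rule Lim_transform_eventually[OF Llim[OF xT]])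
    thus ?thesis unfolding pi_RMC_def by (rule tendsto_Lim[OF trivial_limit_at_right_real])
  qed
  have Eeq: "E_RMC p \<nu> (\<lambda>x. Bw w x - Dw w x) = (\<Sum>x\<in>Trs. L x * f x)"
    unfolding E_RMC_def Trs_eq f_def by (intro sum.cong refl) (simp add: RMC)
  define R where "R u = (\<Sum>x\<in>Trs. (PI u x / pT u) * f x)" for u
  have Rlim: "(R \<longlongrightarrow> (\<Sum>x\<in>Trs. L x * f x)) (at_right 0)"
    unfolding R_def by (intro tendsto_intros Llim) auto
  have Req: "eventually (\<lambda>u. R u = S w u * (u / pT u)) (at_right 0)"
    using ev01
  proof eventually_elim
    case (elim u)
    hence u: "0 < u" "u \<le> 1" by auto
    have "R u = (\<Sum>x\<in>Trs. PI u x * f x) / pT u"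
      unfolding R_def by (simp add: sum_divide_distrib)
    also have "\<dots> = (\<Sum>x\<in>UNIV. PI u x * (Bw w x - Dw w x)) / pT u"
      by (simp add: sum_drift_Trs f_def)
    also have "\<dots> = u * S w u / pT u" unfolding S_def
      by (subst stat_drift) (use piu_stat[OF u] in auto)
    finally show ?case by simp
  qed
  have "((\<lambda>u. PI u {} + PI u UNIV) \<longlongrightarrow> pi0 {} + pi0 UNIV) (at_right 0)"
    by (intro tendsto_intros pi0_lim)
  hence half: "eventually (\<lambda>u. 1/2 < PI u {} + PI u UNIV) (at_right 0)"
    by (rule order_tendstoD(1)) (simp add: pi0_sum)
  define a where "a = cfix / (NN * nn * mm)"
  have apos: "0 < a" unfolding a_def using cfix_pos NNpos nnpos mmpos by simp
  have bnd: "eventually (\<lambda>u. a \<le> u / pT u \<and> u / pT u \<le> 2 / kk) (at_right 0)"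
    using ev01 half
  proof eventually_elim
    case (elim u)
    hence u: "0 < u" "u \<le> 1" by auto
    have pt: "0 < pT u" by (rule pTpos[OF u])
    have up: "cfix * pT u \<le> NN * nn * mm * u" unfolding pT_def by (rule piTrs_upper[OF u])
    have lo: "kk * u * (PI u {} + PI u UNIV) \<le> pT u" unfolding pT_def by (rule piTrs_lower[OF False u])
    have "a * pT u \<le> u"
      using up NNpos nnpos mmpos by (simp add: a_def field_simps)
    hence A: "a \<le> u / pT u" using pt by (simp add: field_simps)
    have "kk * u * (1/2) \<le> kk * u * (PI u {} + PI u UNIV)"
      using elim kk_pos u by (intro mult_left_mono) auto
    hence "kk * u / 2 \<le> pT u" using lo by simp
    hence B: "u / pT u \<le> 2 / kk" using pt kk_pos by (simp add: field_simps)
    show ?case using A B by simp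
  qed
  have "0 < (\<Sum>x\<in>Trs. L x * f x) \<longleftrightarrow> 0 < Wt w * (pi0 UNIV - \<nu>)"
    by (rule sign_lemma[OF Rlim S_lim Req bnd apos])
  thus ?thesis using Eeq W by (simp add: zero_less_mult_iff)
qed

lemma freqA_UNIV: "freqA (UNIV::'g set) = 1" by (simp add: freqA_def)
lemma freqA_empty: "freqA ({}::'g set) = 0" by (simp add: freqA_def)

lemma E_freq: "E_MSS p \<nu> freqA 0 = pi0 UNIV"
proof -
  have "(\<Sum>x\<in>Trs. pi0 x * freqA x) = 0" by (rule sum.neutral) (simp add: pi0_Trs)
  thus ?thesis unfolding E_MSS_def pi_MSS_0
    by (simp add: sum_split3[of "\<lambda>x. pi0 x * freqA x"] freqA_UNIV freqA_empty)
qed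

lemma E_freq_hat:
  assumes "(\<Sum>g\<in>UNIV. repro_values p g) = real CARD('g)"
  shows "E_MSS p \<nu> (freqA_hat p) 0 = pi0 UNIV"
proof -
  have "(\<Sum>x\<in>Trs. pi0 x * freqA_hat p x) = 0" by (rule sum.neutral) (simp add: pi0_Trs)
  moreover have "freqA_hat p UNIV = 1" using assms by (simp add: freqA_hat_def)
  moreover have "freqA_hat p {} = 0" by (simp add: freqA_hat_def)
  ultimately show ?thesis unfolding E_MSS_def pi_MSS_0
    by (simp add: sum_split3[of "\<lambda>x. pi0 x * freqA_hat p x"])
qed

end

context model2 begin

lemma d_ne0: "d_rate p g x \<noteq> 0" using d_pos[of g x] by simp

lemma e_rate_nonneg: "0 \<le> e_rate p h g x"
  unfolding e_rate_def by (rule sum_nonneg) (auto intro: p_nonneg)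

definition Lm :: "'g \<Rightarrow> 'g \<Rightarrow> real" where "Lm h g = e_rate p g h {} / d_rate p h {}"

lemma Lm_stoch: "stoch Lm"
proof -
  have "(\<Sum>g\<in>UNIV. Lm h g) = 1" for h
  proof -
    have "(\<Sum>g\<in>UNIV. Lm h g) = (\<Sum>g\<in>UNIV. e_rate p g h {}) / d_rate p h {}"
      by (simp add: Lm_def sum_divide_distrib)
    also have "\<dots> = 1" using d_pos[of h "{}"] by (simp add: d_rate_def)
    finally show ?thesis .
  qed
  moreover have "0 \<le> Lm h g" for h g
    using e_rate_nonneg d_nonneg by (simp add: Lm_def)
  ultimately show ?thesis by (simp add: stoch_def)
qed

lemma Lm_reach_list:
  assumes "\<forall>e\<in>set l. e \<in> events \<and> 0 < p {} e"
  shows "(h, foldr (\<circ>) (map snd l) id h) \<in> (posrel Lm)\<^sup>*"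
  using assms
proof (induction l)
  case Nil show ?case by simp
next
  case (Cons e l)
  let ?h = "foldr (\<circ>) (map snd l) id h"
  have ih: "(h, ?h) \<in> (posrel Lm)\<^sup>*" by (rule Cons.IH) (use Cons.prems in auto)
  have ee: "e \<in> events" "0 < p {} e" using Cons.prems by auto
  have step: "(?h, snd e ?h) \<in> (posrel Lm)\<^sup>*"
  proof (cases "?h \<in> fst e")
    case True
    have "p {} e = (if ?h \<in> fst e \<and> snd e ?h = snd e ?h then p {} e else 0)" using True by simp
    also have "\<dots> \<le> (\<Sum>e'\<in>events. if ?h \<in> fst e' \<and> snd e' ?h = snd e ?h then p {} e' else 0)"
      by (rule member_le_sum[OF ee(1)]) (auto intro: p_nonneg)
    also have "\<dots> = e_rate p (snd e ?h) ?h {}" by (simp add: e_rate_alt)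
    finally have "0 < e_rate p (snd e ?h) ?h {}" using ee by simp
    hence "0 < Lm ?h (snd e ?h)" using d_pos by (simp add: Lm_def)
    thus ?thesis by (simp add: posrel_def r_into_rtrancl)
  next
    case False
    thus ?thesis using events_id[OF ee(1) False] by simp
  qed
  have eq: "foldr (\<circ>) (map snd (e#l)) id h = snd e ?h" by simp
  show ?case unfolding eq by (rule rtrancl_trans[OF ih step])
qed

lemma Lm_reach: "(h, g0) \<in> (posrel Lm)\<^sup>*"
  using Lm_reach_list[of es h] es_ev es_comp by auto

definition piL :: "'g \<Rightarrow> real" where
  "piL = (THE \<pi>. (\<forall>x. 0 \<le> \<pi> x) \<and> (\<Sum>x\<in>UNIV. \<pi> x) = 1 \<and> invar Lm \<pi>)"

lemma piL: "(\<forall>x. 0 \<le> piL x) \<and> (\<Sum>x\<in>UNIV. piL x) = 1 \<and> invar Lm piL"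
  unfolding piL_def by (rule theI'[OF stoch_stationary_unique[OF Lm_stoch]]) (use Lm_reach in blast)

definition cL :: real where "cL = real CARD('g) / (\<Sum>g\<in>UNIV. piL g / d_rate p g {})"

definition vL :: "'g \<Rightarrow> real" where "vL g = cL * piL g / d_rate p g {}"

lemma sum_piL_d_pos: "0 < (\<Sum>g\<in>UNIV. piL g / d_rate p g {})"
proof -
  obtain g where g: "0 < piL g"
  proof (rule ccontr)
    assume "\<not> thesis"
    hence "\<forall>g. piL g \<le> 0" using that by (meson not_le)
    hence "(\<Sum>g\<in>UNIV. piL g) \<le> 0" by (simp add: sum_nonpos)
    thus False using piL by simp
  qed
  have "piL g / d_rate p g {} \<le> (\<Sum>g\<in>UNIV. piL g / d_rate p g {})"
    by (rule member_le_sum) (use piL d_nonneg in auto)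
  moreover have "0 < piL g / d_rate p g {}" using g d_pos by simp
  ultimately show ?thesis by linarith
qed

lemma cL_pos: "0 < cL" using sum_piL_d_pos by (simp add: cL_def)

definition vprop :: "('g \<Rightarrow> real) \<Rightarrow> bool" where
  "vprop v \<longleftrightarrow> (\<forall>g. d_rate p g {} * v g = (\<Sum>h\<in>UNIV. e_rate p g h {} * v h)) \<and>
                         (\<Sum>g\<in>UNIV. v g) = real (card (UNIV :: 'g set))"

lemma vL_prop: "vprop vL"
proof -
  have "d_rate p g {} * vL g = (\<Sum>h\<in>UNIV. e_rate p g h {} * vL h)" for g
  proof -
    have "(\<Sum>h\<in>UNIV. e_rate p g h {} * vL h) = cL * (\<Sum>h\<in>UNIV. piL h * Lm h g)"
      by (simp add: vL_def Lm_def sum_distrib_left algebra_simps)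
    also have "\<dots> = cL * piL g" using piL by (simp add: invar_def)
    also have "\<dots> = d_rate p g {} * vL g" using d_pos[of g "{}"] by (simp add: vL_def)
    finally show ?thesis by simp
  qed
  moreover have "(\<Sum>g\<in>UNIV. vL g) = real CARD('g)"
  proof -
    have "(\<Sum>g\<in>UNIV. vL g) = cL * (\<Sum>g\<in>UNIV. piL g / d_rate p g {})"
      by (simp add: vL_def sum_distrib_left)
    thus ?thesis using sum_piL_d_pos by (simp add: cL_def)
  qed
  ultimately show ?thesis by (simp add: vprop_def)
qed

lemma vprop_unique:
  assumes "vprop v"
  shows "v = vL"
proof -
  define w where "w g = d_rate p g {} * v g" for g
  have inv: "invar Lm w"
  proof -
    have "(\<Sum>h\<in>UNIV. w h * Lm h g) = w g" for g
    proof -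
      have "(\<Sum>h\<in>UNIV. w h * Lm h g) = (\<Sum>h\<in>UNIV. e_rate p g h {} * v h)"
        by (intro sum.cong refl) (simp add: w_def Lm_def d_ne0)
      also have "\<dots> = w g" using assms by (simp add: vprop_def w_def)
      finally show ?thesis .
    qed
    thus ?thesis by (simp add: invar_def)
  qed
  have wm: "w = (\<lambda>x. (\<Sum>y\<in>UNIV. w y) * piL x)"
    by (rule invar_multiple[OF Lm_stoch _ piL inv]) (use Lm_reach in blast)
  define s where "s = (\<Sum>y\<in>UNIV. w y)"
  have vg: "v g = s * piL g / d_rate p g {}" for g
  proof -
    have "d_rate p g {} * v g = s * piL g" using fun_cong[OF wm, of g] by (simp add: w_def s_def)
    thus ?thesis using d_pos[of g "{}"] by (simp add: field_simps)
  qed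
  have "(\<Sum>g\<in>UNIV. v g) = s * (\<Sum>g\<in>UNIV. piL g / d_rate p g {})"
    by (simp add: vg sum_distrib_left)
  hence "s = cL" using assms sum_piL_d_pos by (simp add: vprop_def cL_def field_simps)
  thus ?thesis by (simp add: fun_eq_iff vg vL_def)
qed

lemma repro_eq: "repro_values p = vL"
proof -
  have "\<exists>!v. vprop v" using vL_prop vprop_unique by blast
  hence "vprop (repro_values p)" unfolding repro_values_def vprop_def[symmetric] by (rule theI')
  thus ?thesis by (rule vprop_unique)
qed

lemma repro_sum: "(\<Sum>g\<in>UNIV. repro_values p g) = real CARD('g)"
  using vL_prop by (simp add: repro_eq vprop_def)

lemma Wt_repro: "0 < Wt (repro_values p)"
proof -
  have "Wt (repro_values p) = (\<Sum>g\<in>UNIV. cL * piL g)"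
    unfolding Wt_def repro_eq vL_def by (intro sum.cong refl) (simp add: field_simps d_ne0)
  also have "\<dots> = cL" using piL by (simp add: sum_distrib_left[symmetric])
  finally show ?thesis using cL_pos by simp
qed

lemma Wt_one: "0 < Wt (\<lambda>_. 1)"
  unfolding Wt_def by (rule sum_pos) (auto intro: d_pos)

end

theorem theorem5:
  fixes p :: "('g::finite) set \<Rightarrow> 'g event \<Rightarrow> real" and \<nu> :: real
  assumes "replacement_rule p" and "fixation_axiom p" and "assumption1 p"
    and "0 < \<nu>" and "\<nu> < 1"
  shows "(rho_A p \<nu> > rho_a p \<nu> \<longleftrightarrow> E_RMC p \<nu> (Delta_sel p) > 0)
       \<and> (rho_A p \<nu> > rho_a p \<nu> \<longleftrightarrow> E_RMC p \<nu> (Delta_sel_hat p) > 0)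
       \<and> (rho_A p \<nu> > rho_a p \<nu> \<longleftrightarrow>
            (\<exists>D. (E_MSS p \<nu> (Delta_sel p) has_real_derivative D) (at 0 within {0..1}) \<and> D > 0))
       \<and> (rho_A p \<nu> > rho_a p \<nu> \<longleftrightarrow>
            (\<exists>D. (E_MSS p \<nu> (Delta_sel_hat p) has_real_derivative D) (at 0 within {0..1}) \<and> D > 0))
       \<and> (rho_A p \<nu> > rho_a p \<nu> \<longleftrightarrow> E_MSS p \<nu> freqA 0 > \<nu>)
       \<and> E_MSS p \<nu> freqA 0 = E_MSS p \<nu> (freqA_hat p) 0"
proof -
  obtain g0 es where fx: "length es \<ge> 1"
      "\<forall>k < length es. es ! k \<in> events \<and> (\<forall>x. p x (es ! k) > 0)"
      "\<exists>k < length es. g0 \<in> fst (es ! k)"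
      "\<forall>h. foldr (\<circ>) (map snd es) id h = g0"
    using assms(2) unfolding fixation_axiom_def by blast
  have es_ev: "\<forall>e\<in>set es. e \<in> events \<and> (\<forall>x. 0 < p x e)"
  proof
    fix e assume "e \<in> set es"
    then obtain i where "i < length es" "es ! i = e" by (auto simp: in_set_conv_nth)
    thus "e \<in> events \<and> (\<forall>x. 0 < p x e)" using fx(2) by auto
  qed
  have g0_in: "\<exists>e\<in>set es. g0 \<in> fst e" using fx(3) by (auto intro: nth_mem)
  interpret M: model2 p \<nu> g0 es
    by unfold_locales (use assms es_ev g0_in fx(4) in auto)
  have Dsel: "Delta_sel p = (\<lambda>x. M.Bw (\<lambda>_. 1) x - M.Dw (\<lambda>_. 1) x)"
    by (simp add: fun_eq_iff M.Delta_sel_Bw)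
  have Dhat: "Delta_sel_hat p = (\<lambda>x. M.Bw (repro_values p) x - M.Dw (repro_values p) x)"
    by (simp add: fun_eq_iff M.Delta_sel_hat_Bw)
  have key: "rho_A p \<nu> > rho_a p \<nu> \<longleftrightarrow> \<nu> < M.pi0 UNIV" using M.key_equiv by simp
  show ?thesis
    unfolding Dsel Dhat key
    using M.E_RMC_iff[OF M.Wt_one] M.E_RMC_iff[OF M.Wt_repro]
      M.Ef_deriv_iff[OF M.Wt_one] M.Ef_deriv_iff[OF M.Wt_repro]
      M.E_freq M.E_freq_hat[OF M.repro_sum]
    by simp
qed

end
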